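(* Let $0<\delta<1/4$, $K_3>K_2>K_1>1$, $p\in(0,1/2]$, and let $\epsilon\in(0,c(p)]$ for a suitable function $c(p)>0$. There exist $\lambda=\lambda(p,\epsilon)\in(0,1/3)$, $\gamma=\gamma(p,\epsilon)\in(0,1)$ and $n_0=n_0(p,\epsilon)$ such that the following holds. Let $n\ge n_0$, $1\le N\le\binom{n}{\lfloor pn\rfloor}\exp(-\epsilon n)$, let $\mathcal{A}$ be $(N,n,K_1,K_2,K_3,\delta)$-admissible, let $f\in\ell_1(\mathbb{Z})$ be nonnegative with $\|f\|_1=1$, let $L\ge1$ and $R=\gamma L$, and let integers $\ell\in[(1-\gamma)n,n]$ and $s\in[p\ell-\gamma\ell,p\ell+\gamma\ell]$. Then for every fixed $(X_1,\dots,X_n)\in\mathcal{A}$, if $\|f_{\mathcal{A},s,\ell}\|_\infty\ge L(N\sqrt{n})^{-1}$, there exists $t\in\mathbb{Z}$ with $f_{\mathcal{A},s,\ell}(t)\ge L(N\sqrt{n})^{-1}$ whose averaging sequence $(t_i)_{i=0}^\ell$ and step record $(w_i)_{i=1}^\ell$ satisfy \[\#\{i\in[\ell] : \text{step } i \text{ is } \lambda\text{-robust and step } i \text{ is not an } R\text{-drop}\}\ge\gamma n.\]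
   Context: Admissible sets: for integers $N,n\ge1$ and reals $0<\delta<1/4$, $K_3>K_2>K_1>1$, a set $\mathcal{A}\subseteq\mathbb{Z}^n$ is $(N,n,K_1,K_2,K_3,\delta)$-admissible if: $\mathcal{A}=A_1\times\cdots\times A_n$ with each $A_i\subseteq\mathbb{Z}$; $|A_1|\cdots|A_n|\le(K_3N)^n$; $\max_i\max\{|a|:a\in A_i\}\le nN$; $A_i$ is an integer interval of size at least $2N+1$ for $i>2\delta n$; and either (P1),(P2) or (Q1),(Q2) hold, where (P1): for $i\le\delta n$, $A_{2i}$ is an integer interval of size at least $2N+1$ contained in $[-K_1N,K_1N]$; (P2): for $i\le\delta n$, $A_{2i-1}$ is symmetric about $0$, is a union of two integer intervals of total size at least $2N$, and $A_{2i-1}\cap[-K_2N,K_2N]=\emptyset$; (Q1): for $i\le\delta n$, $A_{2i}$ is an integer interval of size at least $2N+1$ contained in $[K_1N,K_2N]$; (Q2): for $i\le\delta n$, $A_{2i-1}$ is an integer interval of size at least $2N+1$ contained in $[-K_2N,-K_1N]$. Averages: for fixed $(X_1,\dots,X_n)$, $f:\mathbb{Z}\to\mathbb{R}$ and integers $0\le s\le\ell\le n$, $f_{\mathcal{A},s,\ell}(t)=\binom{\ell}{s}^{-1}\sum_{v\in\{0,1\}^\ell_s}f(t+v_1X_1+\cdots+v_\ell X_\ell)$, where $\{0,1\}^\ell_s$ is the set of $0/1$ vectors of length $\ell$ with sum $s$; by convention $f_{\mathcal{A},s,\ell}\equiv 0$ if $s<0$ or $s>\ell$. One has $f_{\mathcal{A},s,\ell}(t)=(1-s/\ell)f_{\mathcal{A},s,\ell-1}(t)+(s/\ell)f_{\mathcal{A},s-1,\ell-1}(t+X_\ell)$.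 Step record and averaging sequence of $t$ (given $f,\mathcal{A},s,\ell$ and $X$): set $t_\ell=t$, $s_\ell = s$. Recursively for $i=\ell,\ell-1,\dots,1$, with $h_i=f_{\mathcal{A},s_i,i}(t_i)$: set $w_i=0$ if $1-s_i/i>0$ and $f_{\mathcal{A},s_i,i-1}(t_i)\ge h_i$, and otherwise $w_i=1$ (then $s_i/i>0$ and $f_{\mathcal{A},s_i-1,i-1}(t_i+X_i)\ge h_i$); set $t_{i-1}=t_i+w_iX_i$ and $s_{i-1}=s_i-w_i$. Let $W_i=\sum_{j=1}^i w_j$ (so $W_i = s_i$) and $\overline{W}_i=W_i/i$. Step $i$ is $\lambda$-robust if $\overline{W}_i\in(\lambda,1-\lambda)$. There is an $R$-drop at step $i$ if $f_{\mathcal{A},W_i-y,i-1}(t_{i-1}+zX_i)\le R/(N\sqrt{n})$ for all $y\in\{0,1\}$ and $z\in\{-1,1\}$. *)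

theory Defs
  imports "HOL-Analysis.Analysis"
begin

definition int_interval_size_ge :: "int set \<Rightarrow> int \<Rightarrow> bool" where
  "int_interval_size_ge B m \<longleftrightarrow> (\<exists>a b. B = {a..b} \<and> b - a + 1 \<ge> m)"

(* A = A_1 x ... x A_n represented by the factor family A i, i \<in> {1..n} *)
definition admissible ::
  "nat \<Rightarrow> nat \<Rightarrow> real \<Rightarrow> real \<Rightarrow> real \<Rightarrow> real \<Rightarrow> (nat \<Rightarrow> int set) \<Rightarrow> bool" where
  "admissible N n K1 K2 K3 \<delta> A \<longleftrightarrow>
     (\<Prod>i\<in>{1..n}. real (card (A i))) \<le> (K3 * real N) ^ n
   \<and> (\<forall>i\<in>{1..n}. \<forall>a\<in>A i. \<bar>a\<bar> \<le> int n * int N)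
   \<and> (\<forall>i\<in>{1..n}. real i > 2 * \<delta> * real n \<longrightarrow> int_interval_size_ge (A i) (2 * int N + 1))
   \<and> ( ( (\<forall>i. 1 \<le> i \<and> real i \<le> \<delta> * real n \<longrightarrow>
              int_interval_size_ge (A (2*i)) (2 * int N + 1) \<and>
              (\<forall>a\<in>A (2*i). - K1 * real N \<le> real_of_int a \<and> real_of_int a \<le> K1 * real N))
         \<and> (\<forall>i. 1 \<le> i \<and> real i \<le> \<delta> * real n \<longrightarrow>
              (\<forall>a. a \<in> A (2*i-1) \<longleftrightarrow> - a \<in> A (2*i-1)) \<and>
              (\<exists>a b c d. A (2*i-1) = {a..b} \<union> {c..d} \<and> card (A (2*i-1)) \<ge> 2 * N) \<and>
              (\<forall>a\<in>A (2*i-1). \<not> (- K2 * real N \<le> real_of_int a \<and> real_of_int a \<le> K2 * real N))))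
       \<or> ( (\<forall>i. 1 \<le> i \<and> real i \<le> \<delta> * real n \<longrightarrow>
              int_interval_size_ge (A (2*i)) (2 * int N + 1) \<and>
              (\<forall>a\<in>A (2*i). K1 * real N \<le> real_of_int a \<and> real_of_int a \<le> K2 * real N))
         \<and> (\<forall>i. 1 \<le> i \<and> real i \<le> \<delta> * real n \<longrightarrow>
              int_interval_size_ge (A (2*i-1)) (2 * int N + 1) \<and>
              (\<forall>a\<in>A (2*i-1). - K2 * real N \<le> real_of_int a \<and> real_of_int a \<le> - K1 * real N))))"

(* f_{A,s,l}(t): average over 0/1 vectors of length l with sum s, encoded as
   subsets S of {1..l} with card S = s; zero if s < 0 or s > l *)
definition avg :: "(int \<Rightarrow> real) \<Rightarrow> (nat \<Rightarrow> int) \<Rightarrow> int \<Rightarrow> nat \<Rightarrow> int \<Rightarrow> real" where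
  "avg f X s l t =
     (if s < 0 \<or> s > int l then 0
      else (\<Sum>S\<in>{S. S \<subseteq> {1..l} \<and> card S = nat s}. f (t + (\<Sum>j\<in>S. X j)))
           / real (l choose nat s))"

definition wbit :: "(int \<Rightarrow> real) \<Rightarrow> (nat \<Rightarrow> int) \<Rightarrow> int \<Rightarrow> int \<Rightarrow> nat \<Rightarrow> int" where
  "wbit f X ti si i =
     (if 1 - real_of_int si / real i > 0 \<and> avg f X si (i - 1) ti \<ge> avg f X si i ti then 0 else 1)"

(* avstate f X l t s k = (t_{l-k}, s_{l-k}) *)
fun avstate :: "(int \<Rightarrow> real) \<Rightarrow> (nat \<Rightarrow> int) \<Rightarrow> nat \<Rightarrow> int \<Rightarrow> int \<Rightarrow> nat \<Rightarrow> int \<times> int" where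
  "avstate f X l t s 0 = (t, s)"
| "avstate f X l t s (Suc k) =
     (let i = l - k; (ti, si) = avstate f X l t s k; w = wbit f X ti si i
      in (ti + w * X i, si - w))"

definition tseq :: "(int \<Rightarrow> real) \<Rightarrow> (nat \<Rightarrow> int) \<Rightarrow> int \<Rightarrow> nat \<Rightarrow> int \<Rightarrow> nat \<Rightarrow> int" where
  "tseq f X s l t i = fst (avstate f X l t s (l - i))"

definition wseq :: "(int \<Rightarrow> real) \<Rightarrow> (nat \<Rightarrow> int) \<Rightarrow> int \<Rightarrow> nat \<Rightarrow> int \<Rightarrow> nat \<Rightarrow> int" where
  "wseq f X s l t i =
     (let (ti, si) = avstate f X l t s (l - i) in wbit f X ti si i)"

definition Wsum :: "(int \<Rightarrow> real) \<Rightarrow> (nat \<Rightarrow> int) \<Rightarrow> int \<Rightarrow> nat \<Rightarrow> int \<Rightarrow> nat \<Rightarrow> int" where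
  "Wsum f X s l t i = (\<Sum>j\<in>{1..i}. wseq f X s l t j)"

definition robust_step :: "real \<Rightarrow> (int \<Rightarrow> real) \<Rightarrow> (nat \<Rightarrow> int) \<Rightarrow> int \<Rightarrow> nat \<Rightarrow> int \<Rightarrow> nat \<Rightarrow> bool" where
  "robust_step lam f X s l t i \<longleftrightarrow>
     (let Wb = real_of_int (Wsum f X s l t i) / real i in lam < Wb \<and> Wb < 1 - lam)"

definition drop_step :: "real \<Rightarrow> nat \<Rightarrow> nat \<Rightarrow> (int \<Rightarrow> real) \<Rightarrow> (nat \<Rightarrow> int) \<Rightarrow> int \<Rightarrow> nat \<Rightarrow> int \<Rightarrow> nat \<Rightarrow> bool" where
  "drop_step R N n f X s l t i \<longleftrightarrow>
     (\<forall>y\<in>{0,1::int}. \<forall>z\<in>{-1,1::int}.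
        avg f X (Wsum f X s l t i - y) (i - 1) (tseq f X s l t (i - 1) + z * X i)
          \<le> R / (real N * sqrt (real n)))"

end

theory Submission
  imports Defs
begin

lemma subsets_split:
  "{S. S \<subseteq> {1..Suc j} \<and> card S = Suc k} =
   {S. S \<subseteq> {1..j} \<and> card S = Suc k} \<union> insert (Suc j) ` {S. S \<subseteq> {1..j} \<and> card S = k}"
proof (intro equalityI subsetI)
  fix S assume S: "S \<in> {S. S \<subseteq> {1..Suc j} \<and> card S = Suc k}"
  have fin: "finite S" using S finite_subset by blast
  show "S \<in> {S. S \<subseteq> {1..j} \<and> card S = Suc k} \<union> insert (Suc j) ` {S. S \<subseteq> {1..j} \<and> card S = k}"
  proof (cases "Suc j \<in> S")
    case True
    have "S = insert (Suc j) (S - {Suc j})" using True by auto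
    moreover have "S - {Suc j} \<subseteq> {1..j}" using S by auto
    moreover have "card (S - {Suc j}) = k" using S True fin by simp
    ultimately show ?thesis by blast
  next
    case False
    then have "S \<subseteq> {1..j}" using S by (auto simp: le_Suc_eq)
    then show ?thesis using S by auto
  qed
next
  fix S assume "S \<in> {S. S \<subseteq> {1..j} \<and> card S = Suc k} \<union> insert (Suc j) ` {S. S \<subseteq> {1..j} \<and> card S = k}"
  then show "S \<in> {S. S \<subseteq> {1..Suc j} \<and> card S = Suc k}"
  proof
    assume "S \<in> {S. S \<subseteq> {1..j} \<and> card S = Suc k}" then show ?thesis by auto
  next
    assume "S \<in> insert (Suc j) ` {S. S \<subseteq> {1..j} \<and> card S = k}"
    then obtain U where U: "U \<subseteq> {1..j}" "card U = k" "S = insert (Suc j) U" by auto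
    have "finite U" using U(1) finite_subset by blast
    moreover have "Suc j \<notin> U" using U(1) by auto
    ultimately show ?thesis using U by auto
  qed
qed

definition asum :: "(int \<Rightarrow> real) \<Rightarrow> (nat \<Rightarrow> int) \<Rightarrow> nat \<Rightarrow> nat \<Rightarrow> int \<Rightarrow> real" where
  "asum f X k l t = (\<Sum>S\<in>{S. S \<subseteq> {1..l} \<and> card S = k}. f (t + (\<Sum>j\<in>S. X j)))"

lemma asum_split:
  "asum f X (Suc k) (Suc j) t = asum f X (Suc k) j t + asum f X k j (t + X (Suc j))"
proof -
  let ?g = "\<lambda>S. f (t + (\<Sum>j\<in>S. X j))"
  let ?A = "{S. S \<subseteq> {1..j} \<and> card S = Suc k}"
  let ?B = "{S. S \<subseteq> {1..j} \<and> card S = k}"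
  have finA: "finite ?A" by (rule finite_subset[of _ "Pow {1..j}"]) auto
  have finB: "finite ?B" by (rule finite_subset[of _ "Pow {1..j}"]) auto
  have disj: "?A \<inter> insert (Suc j) ` ?B = {}" by auto
  have inj: "inj_on (insert (Suc j)) ?B"
    by (rule inj_onI) (metis (no_types, lifting) Diff_insert_absorb atLeastAtMost_iff
          mem_Collect_eq not_less_eq_eq order_refl subsetD)
  have "asum f X (Suc k) (Suc j) t = sum ?g ?A + sum ?g (insert (Suc j) ` ?B)"
    unfolding asum_def subsets_split
    by (rule sum.union_disjoint) (use finA finB disj in auto)
  also have "sum ?g (insert (Suc j) ` ?B) = sum (?g \<circ> insert (Suc j)) ?B"
    by (rule sum.reindex[OF inj])
  also have "\<dots> = asum f X k j (t + X (Suc j))"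
    unfolding asum_def
  proof (rule sum.cong[OF refl])
    fix S assume S: "S \<in> ?B"
    have "finite S" using S finite_subset by blast
    moreover have "Suc j \<notin> S" using S by auto
    ultimately show "(?g \<circ> insert (Suc j)) S = f (t + X (Suc j) + (\<Sum>j\<in>S. X j))"
      by (simp add: add.assoc)
  qed
  finally show ?thesis unfolding asum_def by simp
qed

lemma avg_asum: "0 \<le> s \<Longrightarrow> s \<le> int l \<Longrightarrow> avg f X s l t = asum f X (nat s) l t / real (l choose nat s)"
  unfolding avg_def asum_def by auto

lemma avg_out: "s < 0 \<or> s > int l \<Longrightarrow> avg f X s l t = 0"
  unfolding avg_def by auto

lemma avg_zero: "avg f X 0 l t = f t"
proof -
  have "{S. S \<subseteq> {1..l} \<and> card S = 0} = {{}}"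
  proof (intro equalityI subsetI)
    fix S assume "S \<in> {S. S \<subseteq> {1..l} \<and> card S = 0}"
    then have h: "S \<subseteq> {1..l}" "card S = 0" by auto
    have "finite S" using h(1) by (rule finite_subset) simp
    then have "S = {}" using h(2) by simp
    then show "S \<in> {{}}" by simp
  qed simp
  then show ?thesis unfolding avg_def by simp
qed

lemma avg_rec:
  assumes "1 \<le> i"
  shows "avg f X s i t = (1 - real_of_int s / real i) * avg f X s (i-1) t
           + (real_of_int s / real i) * avg f X (s-1) (i-1) (t + X i)"
proof -
  obtain j where j: "i = Suc j" using assms by (cases i) auto
  have "s < 0 \<or> s = 0 \<or> s > int i \<or> (\<exists>k. s = int (Suc k) \<and> Suc k \<le> i)"
  proof (cases "0 < s \<and> s \<le> int i")
    case True
    then have "s = int (Suc (nat s - 1)) \<and> Suc (nat s - 1) \<le> i" by auto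
    then show ?thesis by blast
  qed auto
  then consider "s < 0" | "s = 0" | "s > int i" | k where "s = int (Suc k)" "Suc k \<le> i"
    by blast
  then show ?thesis
  proof cases
    case 1 then show ?thesis by (simp add: avg_out)
  next
    case 2 then show ?thesis by (simp add: avg_zero avg_out)
  next
    case 3 then show ?thesis using j by (simp add: avg_out)
  next
    case 4
    have kj: "k \<le> j" using 4 j by simp
    have e1: "real (Suc j choose Suc k) * real (Suc j - Suc k) = real (Suc j) * real (j choose Suc k)"
    proof -
      have "(Suc j choose Suc k) * (Suc j - Suc k) = Suc j * (j choose Suc k)"
        using binomial_absorb_comp[of "Suc j" "Suc k"] kj by (simp add: mult.commute)
      then show ?thesis by (metis of_nat_mult)
    qed
    have e2: "real (Suc j choose Suc k) * real (Suc k) = real (Suc j) * real (j choose k)"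
    proof -
      have "(Suc j choose Suc k) * Suc k = Suc j * (j choose k)"
        using Suc_times_binomial_eq[of j k] by (simp add: mult.commute)
      then show ?thesis by (metis of_nat_mult)
    qed
    have pos: "real (Suc j choose Suc k) > 0" using kj zero_less_binomial[of "Suc k" "Suc j"] by linarith
    have posk: "real (j choose k) > 0" using kj by simp
    define a where "a = asum f X (Suc k) j t"
    define b where "b = asum f X k j (t + X (Suc j))"
    have ns: "nat s = Suc k" using 4 by simp
    have lhs: "avg f X s i t = (a + b) / real (Suc j choose Suc k)"
    proof -
      have "avg f X s i t = asum f X (nat s) i t / real (i choose nat s)"
        by (rule avg_asum) (use 4 j in auto)
      also have "\<dots> = (a + b) / real (Suc j choose Suc k)"
        unfolding ns j a_def b_def asum_split by (rule refl)
      finally show ?thesis .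
    qed
    have t1: "(1 - real_of_int s / real i) * avg f X s (i-1) t = a / real (Suc j choose Suc k)"
    proof (cases "k = j")
      case True
      have E: "{S. S \<subseteq> {1..j} \<and> card S = Suc j} = {}"
      proof (intro equalityI subsetI)
        fix S assume "S \<in> {S. S \<subseteq> {1..j} \<and> card S = Suc j}"
        then have h: "S \<subseteq> {1..j}" "card S = Suc j" by auto
        have "card S \<le> card {1..j}" by (rule card_mono[OF finite_atLeastAtMost h(1)])
        then show "S \<in> {}" using h(2) by simp
      qed simp
      have "a = 0" unfolding a_def asum_def True E by simp
      then show ?thesis using 4 j True by (simp add: avg_out)
    next
      case False
      then have kj': "Suc k \<le> j" using kj by simp
      define B where "B = real (Suc j choose Suc k)"
      define c where "c = real (j choose Suc k)"
      have Bp: "B > 0" using pos unfolding B_def .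
      have cp: "c > 0" using kj' unfolding c_def by simp
      have av: "avg f X s (i-1) t = a / c"
        using 4 j kj' ns unfolding c_def by (simp add: avg_asum a_def)
      have sr: "real_of_int s = real (Suc k)" using 4 by simp
      have ir: "real i = real (Suc j)" using j by simp
      have d: "real (Suc j - Suc k) = real (Suc j) - real (Suc k)" using kj by (simp add: of_nat_diff)
      have e1': "B * (real (Suc j) - real (Suc k)) = real (Suc j) * c"
        using e1 unfolding B_def c_def d .
      have "1 - real_of_int s / real i = (real (Suc j) - real (Suc k)) / real (Suc j)"
        unfolding sr ir by (simp add: field_simps)
      also have "\<dots> = c / B" using e1' Bp by (simp add: field_simps)
      finally have q: "1 - real_of_int s / real i = c / B" .
      show ?thesis unfolding q av B_def[symmetric] using Bp cp by simp
    qed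
    have t2: "(real_of_int s / real i) * avg f X (s-1) (i-1) (t + X i) = b / real (Suc j choose Suc k)"
    proof -
      define B where "B = real (Suc j choose Suc k)"
      define c where "c = real (j choose k)"
      have Bp: "B > 0" using pos unfolding B_def .
      have cp: "c > 0" using posk unfolding c_def .
      have sk: "s - 1 = int k" using 4 by simp
      have av: "avg f X (s-1) (i-1) (t + X i) = b / c"
        unfolding sk using j kj unfolding c_def by (simp add: avg_asum b_def)
      have sr: "real_of_int s = real (Suc k)" using 4 by simp
      have ir: "real i = real (Suc j)" using j by simp
      have e2': "B * real (Suc k) = real (Suc j) * c" using e2 unfolding B_def c_def .
      have q: "real_of_int s / real i = c / B"
        unfolding sr ir using e2' Bp by (simp add: field_simps)
      show ?thesis unfolding q av B_def[symmetric] using Bp cp by simp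
    qed
    show ?thesis unfolding lhs t1 t2 by (simp add: add_divide_distrib)
  qed
qed

lemma wbit_01: "wbit f X t s i = 0 \<or> wbit f X t s i = 1"
  unfolding wbit_def by auto

lemma avg_pos_range: "avg f X s l t \<noteq> 0 \<Longrightarrow> 0 \<le> s \<and> s \<le> int l"
  using avg_out by (metis not_le)

lemma wbit_prop:
  assumes "1 \<le> i" "avg f X s i t > 0"
  shows "(wbit f X t s i = 0 \<and> avg f X s (i-1) t \<ge> avg f X s i t \<and> s < int i) \<or>
         (wbit f X t s i = 1 \<and> avg f X (s-1) (i-1) (t + X i) \<ge> avg f X s i t \<and> 0 < s)"
proof -
  let ?h = "avg f X s i t"
  let ?A0 = "avg f X s (i-1) t"
  let ?A1 = "avg f X (s-1) (i-1) (t + X i)"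
  have rng: "0 \<le> s" "s \<le> int i" using avg_pos_range[of f X s i t] assms by auto
  have ip: "real i > 0" using assms by simp
  have rec: "?h = (1 - real_of_int s / real i) * ?A0 + (real_of_int s / real i) * ?A1"
    by (rule avg_rec) (use assms in auto)
  show ?thesis
  proof (cases "1 - real_of_int s / real i > 0 \<and> ?A0 \<ge> ?h")
    case True
    then have "s < int i" using ip by (simp add: field_simps)
    then show ?thesis using True unfolding wbit_def by auto
  next
    case False
    then have w: "wbit f X t s i = 1" unfolding wbit_def by auto
    have s0: "s \<noteq> 0"
    proof
      assume "s = 0"
      then have "?A0 = ?h" by (simp add: avg_zero)
      then show False using False \<open>s = 0\<close> by simp
    qed
    show ?thesis
    proof (cases "1 - real_of_int s / real i > 0")
      case True
      then have lt: "?A0 < ?h" using False by auto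
      define r where "r = real_of_int s / real i"
      have r0: "0 < r" using rng s0 ip by (simp add: r_def)
      have "r * ?A1 = ?h - (1 - r) * ?A0" using rec by (simp add: r_def)
      moreover have "(1 - r) * ?A0 < (1 - r) * ?h" using lt True by (simp add: r_def)
      ultimately have "r * ?h < r * ?A1" by (simp add: algebra_simps)
      then have "?A1 \<ge> ?h" using r0 by simp
      then show ?thesis using w rng s0 by auto
    next
      case False
      then have "real_of_int s / real i = 1" using rng ip by (simp add: field_simps)
      then have "?h = ?A1" using rec by simp
      then show ?thesis using w rng s0 by auto
    qed
  qed
qed

definition TT :: "(int \<Rightarrow> real) \<Rightarrow> (nat \<Rightarrow> int) \<Rightarrow> int \<Rightarrow> nat \<Rightarrow> int \<Rightarrow> nat \<Rightarrow> int" where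
  "TT f X s l t i = fst (avstate f X l t s (l - i))"
definition SS :: "(int \<Rightarrow> real) \<Rightarrow> (nat \<Rightarrow> int) \<Rightarrow> int \<Rightarrow> nat \<Rightarrow> int \<Rightarrow> nat \<Rightarrow> int" where
  "SS f X s l t i = snd (avstate f X l t s (l - i))"
definition hh where "hh f X s l t i = avg f X (SS f X s l t i) i (TT f X s l t i)"

lemma wseq_eq: "wseq f X s l t i = wbit f X (TT f X s l t i) (SS f X s l t i) i"
  unfolding wseq_def TT_def SS_def by (simp add: case_prod_beta)

lemma tseq_eq: "tseq f X s l t i = TT f X s l t i"
  unfolding tseq_def TT_def by simp

lemma TS_step:
  assumes "1 \<le> i" "i \<le> l"
  shows "TT f X s l t (i-1) = TT f X s l t i + wseq f X s l t i * X i \<and>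
         SS f X s l t (i-1) = SS f X s l t i - wseq f X s l t i"
proof -
  have e1: "l - (i-1) = Suc (l - i)" using assms by simp
  have e2: "l - (l - i) = i" using assms by simp
  obtain a b where ab: "avstate f X l t s (l - i) = (a, b)" by fastforce
  have "avstate f X l t s (l - (i-1)) = (a + wbit f X a b i * X i, b - wbit f X a b i)"
    unfolding e1 avstate.simps Let_def e2 ab by simp
  then show ?thesis unfolding TT_def SS_def wseq_eq using ab by simp
qed

lemma TS_top: "TT f X s l t l = t" "SS f X s l t l = s"
  unfolding TT_def SS_def by simp_all

lemma hh_mono:
  assumes pos: "avg f X s l t > 0" and k: "k \<le> l"
  shows "hh f X s l t (l - k) \<ge> avg f X s l t"
  using k
proof (induction k)
  case 0 then show ?case by (simp add: hh_def TS_top)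
next
  case (Suc k)
  let ?i = "l - k"
  have i1: "1 \<le> ?i" "?i \<le> l" using Suc by auto
  have hi: "hh f X s l t ?i \<ge> avg f X s l t" using Suc.IH Suc.prems by simp
  then have hpos: "hh f X s l t ?i > 0" using pos by linarith
  have ei: "l - Suc k = ?i - 1" by simp
  have st: "TT f X s l t (?i-1) = TT f X s l t ?i + wseq f X s l t ?i * X ?i \<and>
         SS f X s l t (?i-1) = SS f X s l t ?i - wseq f X s l t ?i" by (rule TS_step[OF i1])
  have "hh f X s l t (?i - 1) \<ge> hh f X s l t ?i"
    using wbit_prop[OF i1(1) hpos[unfolded hh_def]]
  proof (elim disjE conjE)
    assume "wbit f X (TT f X s l t ?i) (SS f X s l t ?i) ?i = 0"
      "avg f X (SS f X s l t ?i) (?i - 1) (TT f X s l t ?i) \<ge> avg f X (SS f X s l t ?i) ?i (TT f X s l t ?i)"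
    then show ?thesis using st unfolding hh_def wseq_eq by simp
  next
    assume "wbit f X (TT f X s l t ?i) (SS f X s l t ?i) ?i = 1"
      "avg f X (SS f X s l t ?i - 1) (?i - 1) (TT f X s l t ?i + X ?i) \<ge> avg f X (SS f X s l t ?i) ?i (TT f X s l t ?i)"
    then show ?thesis using st unfolding hh_def wseq_eq by simp
  qed
  then show ?case using hi unfolding ei by linarith
qed

lemma hh_ge:
  assumes pos: "avg f X s l t > 0" and i: "i \<le> l"
  shows "hh f X s l t i \<ge> avg f X s l t"
proof -
  have "l - (l - i) = i" using i by simp
  then show ?thesis using hh_mono[OF pos, of "l - i"] by simp
qed

definition qq where
  "qq f X s l t i = (if wseq f X s l t i = 0 then 1 - real_of_int (SS f X s l t i) / real i
                     else real_of_int (SS f X s l t i) / real i)"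
definition oth where
  "oth f X s l t i = (if wseq f X s l t i = 0
      then avg f X (SS f X s l t i - 1) (i-1) (TT f X s l t i + X i)
      else avg f X (SS f X s l t i) (i-1) (TT f X s l t i))"

context
  fixes f :: "int \<Rightarrow> real" and X :: "nat \<Rightarrow> int" and s :: int and l :: nat and t :: int
  assumes pos: "avg f X s l t > 0"
begin

lemma SS_range: "i \<le> l \<Longrightarrow> 0 \<le> SS f X s l t i \<and> SS f X s l t i \<le> int i"
  using hh_ge[OF pos, of i] pos avg_pos_range[of f X "SS f X s l t i" i "TT f X s l t i"]
  unfolding hh_def by linarith

lemma step_facts:
  assumes i: "1 \<le> i" "i \<le> l"
  shows "0 < qq f X s l t i" "qq f X s l t i \<le> 1"
    "hh f X s l t i = qq f X s l t i * hh f X s l t (i-1) + (1 - qq f X s l t i) * oth f X s l t i"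
    "hh f X s l t (i-1) \<ge> hh f X s l t i"
    "real ((i-1) choose nat (SS f X s l t (i-1))) = qq f X s l t i * real (i choose nat (SS f X s l t i))"
proof -
  let ?T = "TT f X s l t i" and ?S = "SS f X s l t i" and ?w = "wseq f X s l t i"
  have st: "TT f X s l t (i-1) = ?T + ?w * X i \<and> SS f X s l t (i-1) = ?S - ?w"
    by (rule TS_step[OF i])
  have r1: "0 \<le> ?S" "?S \<le> int i" using SS_range[of i] i by auto
  have r0: "0 \<le> SS f X s l t (i-1)" "SS f X s l t (i-1) \<le> int (i - 1)" using SS_range[of "i-1"] i by auto
  have ip: "real i > 0" using i by simp
  have rec: "hh f X s l t i = (1 - real_of_int ?S / real i) * avg f X ?S (i-1) ?T
           + (real_of_int ?S / real i) * avg f X (?S-1) (i-1) (?T + X i)"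
    unfolding hh_def by (rule avg_rec) (use i in auto)
  have w01: "?w = 0 \<or> ?w = 1" unfolding wseq_eq by (rule wbit_01)
  have hpos: "hh f X s l t i > 0" using hh_ge[OF pos i(2)] pos by linarith
  have wp: "(?w = 0 \<and> avg f X ?S (i-1) ?T \<ge> hh f X s l t i \<and> ?S < int i) \<or>
         (?w = 1 \<and> avg f X (?S-1) (i-1) (?T + X i) \<ge> hh f X s l t i \<and> 0 < ?S)"
    using wbit_prop[OF i(1) hpos[unfolded hh_def]] unfolding wseq_eq hh_def by simp
  have sdiv: "0 \<le> real_of_int ?S / real i" "real_of_int ?S / real i \<le> 1"
    using r1 ip by (simp_all add: divide_le_eq_1)
  have q01: "0 < qq f X s l t i \<and> qq f X s l t i \<le> 1"
    using wp
  proof (elim disjE conjE)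
    assume w: "?w = 0" and lt: "?S < int i"
    have "real_of_int ?S / real i < 1" using lt ip by (simp add: divide_less_eq)
    then show ?thesis using w sdiv unfolding qq_def by simp
  next
    assume w: "?w = 1" and gt: "0 < ?S"
    have "0 < real_of_int ?S / real i" using gt ip by simp
    then show ?thesis using w sdiv unfolding qq_def by simp
  qed
  then show "0 < qq f X s l t i" "qq f X s l t i \<le> 1" by auto
  show "hh f X s l t (i-1) \<ge> hh f X s l t i"
    using wp
  proof (elim disjE conjE)
    assume w: "?w = 0" and a: "avg f X ?S (i-1) ?T \<ge> hh f X s l t i"
    have e: "SS f X s l t (i-1) = ?S" "TT f X s l t (i-1) = ?T" using st w by auto
    show ?thesis using a unfolding hh_def[of f X s l t "i-1"] e .
  next
    assume w: "?w = 1" and a: "avg f X (?S-1) (i-1) (?T + X i) \<ge> hh f X s l t i"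
    have e: "SS f X s l t (i-1) = ?S - 1" "TT f X s l t (i-1) = ?T + X i" using st w by auto
    show ?thesis using a unfolding hh_def[of f X s l t "i-1"] e .
  qed
  show "hh f X s l t i = qq f X s l t i * hh f X s l t (i-1) + (1 - qq f X s l t i) * oth f X s l t i"
    using w01
  proof
    assume w: "?w = 0"
    have e: "SS f X s l t (i-1) = ?S" "TT f X s l t (i-1) = ?T" using st w by auto
    have rec': "avg f X ?S i ?T = (1 - real_of_int ?S / real i) * avg f X ?S (i-1) ?T
           + (real_of_int ?S / real i) * avg f X (?S-1) (i-1) (?T + X i)"
      using rec unfolding hh_def .
    show ?thesis unfolding qq_def oth_def hh_def e using w rec' by (simp add: algebra_simps)
  next
    assume w: "?w = 1"
    have e: "SS f X s l t (i-1) = ?S - 1" "TT f X s l t (i-1) = ?T + X i" using st w by auto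
    have rec': "avg f X ?S i ?T = (1 - real_of_int ?S / real i) * avg f X ?S (i-1) ?T
           + (real_of_int ?S / real i) * avg f X (?S-1) (i-1) (?T + X i)"
      using rec unfolding hh_def .
    show ?thesis unfolding qq_def oth_def hh_def e using w rec' by (simp add: algebra_simps)
  qed
  show "real ((i-1) choose nat (SS f X s l t (i-1))) = qq f X s l t i * real (i choose nat (SS f X s l t i))"
    using w01
  proof
    assume w: "?w = 0"
    define k where "k = nat ?S"
    have Sk: "?S = int k" using r1 k_def by simp
    have "(i - k) * (i choose k) = i * ((i - 1) choose k)" by (rule binomial_absorb_comp)
    then have "real (i - k) * real (i choose k) = real i * real ((i - 1) choose k)"
      by (metis of_nat_mult)
    moreover have "real (i - k) = real i - real k" using r1 Sk by simp
    ultimately have fin: "real ((i - 1) choose k) = (1 - real k / real i) * real (i choose k)"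
      using ip by (simp add: field_simps)
    have e: "nat (SS f X s l t (i-1)) = k" using st w k_def by simp
    have e2: "nat ?S = k" using k_def by simp
    have qv: "qq f X s l t i = 1 - real k / real i" unfolding qq_def using w Sk by simp
    show ?thesis unfolding e e2 qv by (rule fin)
  next
    assume w: "?w = 1"
    have Sp: "0 < ?S" using wp w by auto
    define k where "k = nat ?S - 1"
    have Sk: "?S = int (Suc k)" using Sp k_def by simp
    have "Suc k * (i choose Suc k) = i * ((i - 1) choose k)" by (rule binomial_absorption)
    then have "real (Suc k) * real (i choose Suc k) = real i * real ((i - 1) choose k)"
      by (metis of_nat_mult)
    then have "real ((i - 1) choose k) = (real (Suc k) / real i) * real (i choose Suc k)"
      using ip by (simp add: field_simps)
    moreover have "nat (SS f X s l t (i-1)) = k" using st w Sk by simp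
    moreover have "nat ?S = Suc k" using Sk by simp
    moreover have "qq f X s l t i = real (Suc k) / real i" unfolding qq_def using w Sk by simp
    ultimately show ?thesis by simp
  qed
qed

lemma SS0: "SS f X s l t 0 = 0"
  using SS_range[of 0] by simp

lemma Wsum_SS: "i \<le> l \<Longrightarrow> Wsum f X s l t i = SS f X s l t i"
proof (induction i)
  case 0 then show ?case by (simp add: Wsum_def SS0)
next
  case (Suc i)
  have "SS f X s l t i = SS f X s l t (Suc i) - wseq f X s l t (Suc i)"
    using TS_step[where i="Suc i" and l=l and f=f and X=X and s=s and t=t] Suc.prems by simp
  moreover have "Wsum f X s l t (Suc i) = Wsum f X s l t i + wseq f X s l t (Suc i)"
    unfolding Wsum_def by simp
  moreover have "Wsum f X s l t i = SS f X s l t i" using Suc.IH Suc.prems by simp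
  ultimately show ?case by simp
qed

lemma prod_qq_binom: "k \<le> l \<Longrightarrow> (\<Prod>i\<in>{1..k}. qq f X s l t i) * real (k choose nat (SS f X s l t k)) = 1"
proof (induction k)
  case 0 then show ?case by (simp add: SS0)
next
  case (Suc k)
  have "(\<Prod>i\<in>{1..Suc k}. qq f X s l t i) = (\<Prod>i\<in>{1..k}. qq f X s l t i) * qq f X s l t (Suc k)"
    by (simp add: prod.nat_ivl_Suc')
  moreover have "real (k choose nat (SS f X s l t k)) = qq f X s l t (Suc k) * real (Suc k choose nat (SS f X s l t (Suc k)))"
    using step_facts(5)[of "Suc k"] Suc.prems by simp
  moreover have "(\<Prod>i\<in>{1..k}. qq f X s l t i) * real (k choose nat (SS f X s l t k)) = 1"
    using Suc.IH Suc.prems by simp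
  ultimately show ?case by (simp add: mult_ac)
qed

lemma chain:
  fixes \<gamma> \<eta> :: real and D :: "nat set"
  assumes g: "0 \<le> \<gamma>" "\<gamma> \<le> 1" and eta: "0 \<le> \<eta>" "\<eta> \<le> \<gamma> * avg f X s l t"
    and D: "\<And>i. i \<in> D \<Longrightarrow> oth f X s l t i \<le> \<eta>"
  shows "k \<le> l \<Longrightarrow> hh f X s l t 0 * (\<Prod>i\<in>{1..k}. qq f X s l t i) \<ge>
      (1 - \<gamma>) ^ k * (\<Prod>i\<in>{1..k} - D. qq f X s l t i) * hh f X s l t k"
proof (induction k)
  case 0 then show ?case by simp
next
  case (Suc k)
  let ?q = "qq f X s l t (Suc k)"
  let ?P = "\<Prod>i\<in>{1..k}. qq f X s l t i"
  let ?E = "\<Prod>i\<in>{1..k} - D. qq f X s l t i"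
  have i: "1 \<le> Suc k" "Suc k \<le> l" using Suc.prems by auto
  note sf = step_facts[OF i]
  have IH: "hh f X s l t 0 * ?P \<ge> (1 - \<gamma>) ^ k * ?E * hh f X s l t k" using Suc.IH Suc.prems by simp
  have hpos: "hh f X s l t (Suc k) \<ge> avg f X s l t" using hh_ge[OF pos i(2)] .
  have qpos: "\<forall>j\<in>{1..k}. 0 < qq f X s l t j" using step_facts(1) Suc.prems by auto
  have Epos: "?E \<ge> 0" by (rule prod_nonneg) (use qpos in \<open>auto intro: less_imp_le\<close>)
  have stepi: "hh f X s l t k * ?q \<ge> (1 - \<gamma>) * (if Suc k \<in> D then 1 else ?q) * hh f X s l t (Suc k)"
  proof (cases "Suc k \<in> D")
    case True
    have o: "oth f X s l t (Suc k) \<le> \<eta>" using D True by simp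
    have "(1 - ?q) * oth f X s l t (Suc k) \<le> (1 - ?q) * \<eta>"
      using o sf(2) by (simp add: mult_left_mono)
    also have "\<dots> \<le> \<eta>" by (rule mult_left_le_one_le) (use sf(1) sf(2) eta in auto)
    also have "\<dots> \<le> \<gamma> * hh f X s l t (Suc k)" using eta hpos g by (smt (verit) mult_left_mono)
    finally have "hh f X s l t (Suc k) \<le> ?q * hh f X s l t k + \<gamma> * hh f X s l t (Suc k)"
      using sf(3) by simp
    then show ?thesis using True by (simp add: algebra_simps)
  next
    case False
    have "(1 - \<gamma>) * ?q * hh f X s l t (Suc k) \<le> ?q * hh f X s l t (Suc k)"
      using g sf(1) hpos pos by (simp add: mult_left_le_one_le)
    also have "\<dots> \<le> ?q * hh f X s l t k" using sf(1) sf(4) by (simp add: mult_left_mono)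
    finally show ?thesis using False by (simp add: algebra_simps)
  qed
  have prodP: "(\<Prod>i\<in>{1..Suc k}. qq f X s l t i) = ?P * ?q"
    by (simp add: prod.nat_ivl_Suc')
  have prodE: "(\<Prod>i\<in>{1..Suc k} - D. qq f X s l t i) = ?E * (if Suc k \<in> D then 1 else ?q)"
  proof (cases "Suc k \<in> D")
    case True
    then have "{1..Suc k} - D = {1..k} - D" by (auto simp: le_Suc_eq)
    then show ?thesis using True by simp
  next
    case False
    then have e: "{1..Suc k} - D = insert (Suc k) ({1..k} - D)" by (auto simp: le_Suc_eq)
    have "Suc k \<notin> {1..k} - D" by simp
    then show ?thesis unfolding e using False by (simp add: mult.commute)
  qed
  have "hh f X s l t 0 * (\<Prod>i\<in>{1..Suc k}. qq f X s l t i) = (hh f X s l t 0 * ?P) * ?q"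
    using prodP by simp
  also have "\<dots> \<ge> ((1 - \<gamma>) ^ k * ?E * hh f X s l t k) * ?q"
    using IH sf(1) by (simp add: mult_right_mono)
  finally have "hh f X s l t 0 * (\<Prod>i\<in>{1..Suc k}. qq f X s l t i) \<ge> (1 - \<gamma>) ^ k * ?E * (hh f X s l t k * ?q)"
    by (simp add: mult_ac)
  moreover have "(1 - \<gamma>) ^ k * ?E * (hh f X s l t k * ?q) \<ge>
      (1 - \<gamma>) ^ k * ?E * ((1 - \<gamma>) * (if Suc k \<in> D then 1 else ?q) * hh f X s l t (Suc k))"
    using stepi Epos g by (simp add: mult_left_mono)
  ultimately show ?case using prodE by (simp add: mult_ac)
qed

end

lemma pow_fact_le_exp:
  fixes x :: real assumes "0 \<le> x" shows "x ^ n / fact n \<le> exp x"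
proof -
  have s: "(\<lambda>k. x ^ k /\<^sub>R fact k) sums exp x" by (rule exp_converges)
  have "sum (\<lambda>k. x ^ k /\<^sub>R fact k) {n} \<le> suminf (\<lambda>k. x ^ k /\<^sub>R fact k)"
    by (rule sum_le_suminf) (use s assms in \<open>auto simp: sums_iff\<close>)
  then show ?thesis using s by (simp add: sums_iff divide_inverse mult.commute)
qed

lemma fact_pow_bound:
  fixes \<beta> :: real and K L :: nat
  assumes b: "0 < \<beta>" "\<beta> < 1" and K: "real K \<le> \<beta>^2 * real L"
  shows "fact K / real L ^ K \<ge> exp (- 2 * \<beta> * real L)"
proof (cases "K = 0")
  case True
  then show ?thesis using b by simp
next
  case False
  have "L \<noteq> 0"
  proof
    assume "L = 0" then have "real K \<le> 0" using K by simp
    then show False using False by simp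
  qed
  then have Lp: "real L > 0" by simp
  have "(\<beta> * real L) ^ K / fact K \<le> exp (\<beta> * real L)"
    by (rule pow_fact_le_exp) (use b in simp)
  then have f1: "\<beta> ^ K * real L ^ K * exp (- \<beta> * real L) \<le> fact K"
    by (simp add: field_simps power_mult_distrib exp_minus)
  have lnb: "ln \<beta> < 0" using b by simp
  have "ln (1/\<beta>) < 1/\<beta>"
    using ln_less_self[of "1/\<beta>"] b by simp
  then have "- ln \<beta> < 1 / \<beta>" using b by (simp add: ln_div)
  then have "- ln \<beta> * \<beta> \<le> 1" using b by (simp add: field_simps)
  then have "\<beta> * (\<beta> * ln \<beta>) \<ge> \<beta> * (-1)" using b by (intro mult_left_mono) (auto simp: algebra_simps)
  then have c1: "\<beta>^2 * ln \<beta> \<ge> - \<beta>" by (simp add: power2_eq_square algebra_simps)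
  have "real K * ln \<beta> \<ge> (\<beta>^2 * real L) * ln \<beta>"
    using K lnb by (simp add: mult_right_mono_neg)
  moreover have "(\<beta>^2 * real L) * ln \<beta> \<ge> - \<beta> * real L"
  proof -
    have "real L * (\<beta>^2 * ln \<beta>) \<ge> real L * (- \<beta>)"
      by (rule mult_left_mono[OF c1]) simp
    then show ?thesis by (simp add: mult_ac)
  qed
  ultimately have "real K * ln \<beta> \<ge> - \<beta> * real L" by linarith
  moreover have "\<beta> ^ K = exp (real K * ln \<beta>)"
    using b by (simp add: exp_of_nat_mult)
  ultimately have "\<beta> ^ K \<ge> exp (- \<beta> * real L)" by simp
  then have "\<beta> ^ K * exp (- \<beta> * real L) \<ge> exp (- \<beta> * real L) * exp (- \<beta> * real L)"
    by (simp add: mult_right_mono)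
  moreover have "exp (- \<beta> * real L) * exp (- \<beta> * real L) = exp (- 2 * \<beta> * real L)"
    by (simp flip: exp_add)
  ultimately have "\<beta> ^ K * exp (- \<beta> * real L) \<ge> exp (- 2 * \<beta> * real L)" by linarith
  moreover have "\<beta> ^ K * exp (- \<beta> * real L) \<le> fact K / real L ^ K"
    using f1 Lp by (simp add: field_simps)
  ultimately show ?thesis by linarith
qed

lemma prod_subset_le:
  fixes g :: "'a \<Rightarrow> real"
  assumes "finite C" "B \<subseteq> C" "\<And>x. x \<in> C \<Longrightarrow> 0 \<le> g x \<and> g x \<le> 1"
  shows "prod g C \<le> prod g B"
proof -
  have "prod g C = prod g B * prod g (C - B)"
    using assms by (metis prod.subset_diff mult.commute)
  moreover have "prod g (C - B) \<le> 1" by (rule prod_le_1) (use assms in auto)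
  moreover have "prod g B \<ge> 0" by (rule prod_nonneg) (use assms in auto)
  ultimately show ?thesis by (simp add: mult_left_le)
qed

lemma prod_union_ge:
  fixes g :: "'a \<Rightarrow> real"
  assumes "finite A" "finite B" "\<And>x. x \<in> A \<union> B \<Longrightarrow> 0 \<le> g x \<and> g x \<le> 1"
  shows "prod g (A \<union> B) \<ge> prod g A * prod g B"
proof -
  have "prod g (A \<union> B) = prod g A * prod g (B - A)"
    using assms by (metis Un_Diff_cancel prod.union_disjoint Diff_disjoint finite_Diff)
  moreover have "prod g (B - A) \<ge> prod g B"
    by (rule prod_subset_le) (use assms in auto)
  moreover have "prod g A \<ge> 0" by (rule prod_nonneg) (use assms in auto)
  ultimately show ?thesis by (simp add: mult_left_mono)
qed

lemma mono_chain:
  fixes V :: "nat \<Rightarrow> int"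
  assumes "\<And>i. 1 \<le> i \<Longrightarrow> i \<le> L \<Longrightarrow> V (i-1) \<le> V i"
  shows "a + d \<le> L \<Longrightarrow> V a \<le> V (a + d)"
proof (induction d)
  case 0 then show ?case by simp
next
  case (Suc d)
  have "V (a + d) \<le> V (a + Suc d)" using assms[of "a + Suc d"] Suc.prems by simp
  then show ?case using Suc by simp
qed

lemma distinct_prod_bound:
  fixes V :: "nat \<Rightarrow> int" and A :: "nat set" and L :: nat and \<beta> :: real
  assumes mono: "\<And>i. 1 \<le> i \<Longrightarrow> i \<le> L \<Longrightarrow> V (i-1) \<le> V i"
    and A: "A \<subseteq> {1..L}"
    and dec: "\<And>i. i \<in> A \<Longrightarrow> V (i-1) = V i - 1"
    and rng: "\<And>i. i \<in> A \<Longrightarrow> 1 \<le> V i \<and> real_of_int (V i) \<le> \<beta>^2 * real i"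
    and b: "0 < \<beta>" "\<beta> < 1"
  shows "(\<Prod>i\<in>A. real_of_int (V i) / real i) \<ge> exp (- 2 * \<beta> * real L)"
proof -
  have finA: "finite A" using A finite_subset by blast
  have inj: "inj_on V A"
  proof (rule inj_onI, rule ccontr)
    fix i j assume ij: "i \<in> A" "j \<in> A" "V i = V j" "i \<noteq> j"
    have lt: "\<And>i j. i \<in> A \<Longrightarrow> j \<in> A \<Longrightarrow> i < j \<Longrightarrow> V i < V j"
    proof -
      fix i j assume h: "i \<in> A" "j \<in> A" "i < j"
      have "V i \<le> V (i + (j - 1 - i))"
        by (rule mono_chain[of L V]) (use mono h A in auto)
      then have "V i \<le> V (j - 1)" using h by simp
      then show "V i < V j" using dec[OF h(2)] by simp
    qed
    show False using ij lt[of i j] lt[of j i] by (cases "i < j") auto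
  qed
  define K where "K = nat \<lfloor>\<beta>^2 * real L\<rfloor>"
  have Kb: "real K \<le> \<beta>^2 * real L" unfolding K_def using b by simp
  have Lpos: "A \<noteq> {} \<Longrightarrow> real L > 0" using A by fastforce
  have step1: "(\<Prod>i\<in>A. real_of_int (V i) / real i) \<ge> (\<Prod>i\<in>A. real_of_int (V i) / real L)"
  proof (rule prod_mono)
    fix i assume i: "i \<in> A"
    have "1 \<le> V i" using rng i by auto
    moreover have "1 \<le> i" "i \<le> L" using A i by auto
    ultimately show "0 \<le> real_of_int (V i) / real L \<and> real_of_int (V i) / real L \<le> real_of_int (V i) / real i"
      by (auto intro!: divide_left_mono)
  qed
  have step2: "(\<Prod>i\<in>A. real_of_int (V i) / real L) = (\<Prod>k\<in>V ` A. real_of_int k / real L)"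
    using prod.reindex[OF inj, of "\<lambda>k. real_of_int k / real L"] by simp
  have img: "V ` A \<subseteq> {1..int K}"
  proof
    fix k assume "k \<in> V ` A"
    then obtain i where i: "i \<in> A" "k = V i" by auto
    have "real_of_int k \<le> \<beta>^2 * real L"
      using rng[OF i(1)] A i b by (smt (verit) atLeastAtMost_iff mult_left_mono of_nat_le_iff subsetD zero_le_power2)
    then have "k \<le> \<lfloor>\<beta>^2 * real L\<rfloor>" by linarith
    then show "k \<in> {1..int K}" using rng[OF i(1)] i unfolding K_def by auto
  qed
  have step3: "(\<Prod>k\<in>V ` A. real_of_int k / real L) \<ge> (\<Prod>k\<in>{1..int K}. real_of_int k / real L)"
  proof (cases "A = {}")
    case True
    then have "{1..int K} \<subseteq> {1..int K}" by simp
    show ?thesis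
    proof (cases "K = 0")
      case True then show ?thesis using \<open>A = {}\<close> by simp
    next
      case False
      then have "L > 0" using Kb b by (metis gr0I mult_zero_right of_nat_0 of_nat_le_0_iff)
      have "(\<Prod>k\<in>{1..int K}. real_of_int k / real L) \<le> 1"
      proof (rule prod_le_1)
        fix k assume "k \<in> {1..int K}"
        moreover have "real K \<le> real L" using Kb b
          by (smt (verit) mult_left_le_one_le of_nat_0_le_iff power_le_one zero_le_power2)
        ultimately show "0 \<le> real_of_int k / real L \<and> real_of_int k / real L \<le> 1"
          using \<open>L > 0\<close> by auto
      qed
      then show ?thesis using True by simp
    qed
  next
    case False
    have KL: "real K \<le> real L" using Kb b
      by (smt (verit) mult_left_le_one_le of_nat_0_le_iff power_le_one zero_le_power2)
    show ?thesis
    proof (rule prod_subset_le)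
      show "finite {1..int K}" by simp
      show "V ` A \<subseteq> {1..int K}" by (rule img)
      fix k assume "k \<in> {1..int K}"
      then show "0 \<le> real_of_int k / real L \<and> real_of_int k / real L \<le> 1"
        using KL Lpos[OF False] by auto
    qed
  qed
  have step4: "(\<Prod>k\<in>{1..int K}. real_of_int k / real L) = fact K / real L ^ K"
  proof -
    have e: "{1..int K} = int ` {1..K}"
    proof (intro equalityI subsetI)
      fix x assume x: "x \<in> {1..int K}"
      then have "x = int (nat x)" "nat x \<in> {1..K}" by auto
      then show "x \<in> int ` {1..K}" by (metis imageI)
    qed auto
    have "(\<Prod>k\<in>{1..int K}. real_of_int k / real L) = (\<Prod>k\<in>{1..K}. real k / real L)"
      unfolding e by (subst prod.reindex) (auto simp: inj_on_def)
    also have "\<dots> = (\<Prod>k\<in>{1..K}. real k) / real L ^ K"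
      by (simp add: prod_dividef)
    also have "(\<Prod>k\<in>{1..K}. real k) = fact K" by (simp add: fact_prod)
    finally show ?thesis .
  qed
  show ?thesis using step1 step2 step3 step4 fact_pow_bound[OF b Kb] by linarith
qed

lemma binom_succ: "real (Suc k) * real (n choose Suc k) = real (n - k) * real (n choose k)"
proof -
  have "Suc k * (n choose Suc k) = (n - k) * (n choose k)"
    using binomial_absorption[of k n] binomial_absorb_comp[of n k] by simp
  then show ?thesis by (metis of_nat_mult)
qed

lemma binom_col:
  assumes "4 * m \<le> 3 * (a + 1)"
  shows "real ((a + d) choose m) \<le> 4 ^ d * real (a choose m)"
proof (induction d)
  case 0 then show ?case by simp
next
  case (Suc d)
  let ?n = "Suc (a + d)"
  have "(?n - m) * (?n choose m) = ?n * ((?n - 1) choose m)" by (rule binomial_absorb_comp)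
  then have e: "real (?n - m) * real (?n choose m) = real ?n * real ((a + d) choose m)"
    by (metis of_nat_mult diff_Suc_1)
  have "4 * m \<le> 3 * a + 3" using assms by simp
  then have m: "m < ?n" by linarith
  have r0: "real ?n \<le> 4 * real (?n - m)" using assms m by (simp add: of_nat_diff)
  define A where "A = real (?n - m)"
  define N where "N = real ?n"
  define Cn where "Cn = real (?n choose m)"
  define C' where "C' = real ((a + d) choose m)"
  have e': "A * Cn = N * C'" using e unfolding A_def N_def Cn_def C'_def .
  have r: "N \<le> 4 * A" using r0 unfolding A_def N_def .
  have pos: "A > 0" using m unfolding A_def by simp
  have "N * C' \<le> (4 * A) * C'" by (rule mult_right_mono[OF r]) (simp add: C'_def)
  then have "A * Cn \<le> A * (4 * C')" using e' by (simp add: mult_ac)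
  then have "Cn \<le> 4 * C'" using pos by (rule mult_left_le_imp_le)
  then have "real (?n choose m) \<le> 4 * real ((a + d) choose m)" unfolding Cn_def C'_def .
  then show ?case using Suc.IH by simp
qed

lemma binom_up:
  assumes C: "0 \<le> C" "real l \<le> C * real (k + 1)"
  shows "real (l choose (k + d)) \<le> C ^ d * real (l choose k)"
proof (induction d)
  case 0 then show ?case by simp
next
  case (Suc d)
  have e: "real (Suc (k + d)) * real (l choose Suc (k + d)) = real (l - (k + d)) * real (l choose (k + d))"
    by (rule binom_succ)
  have "real (l - (k + d)) \<le> C * real (Suc (k + d))"
    using C by (smt (verit) le_add1 mult_left_mono of_nat_add of_nat_le_iff diff_le_self Suc_eq_plus1 add.commute add_Suc)
  then have "real (Suc (k + d)) * real (l choose Suc (k + d)) \<le> C * real (Suc (k + d)) * real (l choose (k + d))"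
    using e by (simp add: mult_right_mono)
  then have "real (l choose Suc (k + d)) \<le> C * real (l choose (k + d))"
    by (simp add: mult.assoc mult.left_commute[of C])
  also have "\<dots> \<le> C * (C ^ d * real (l choose k))" using Suc.IH C by (simp add: mult_left_mono)
  finally show ?case by (simp add: mult.assoc)
qed

lemma binom_down:
  assumes C: "0 \<le> C" "k + d \<le> l" "real (k + d) \<le> C * real (l - (k + d) + 1)"
  shows "real (l choose k) \<le> C ^ d * real (l choose (k + d))"
  using C
proof (induction d arbitrary: k)
  case 0 then show ?case by simp
next
  case (Suc d)
  have e: "real (Suc k) * real (l choose Suc k) = real (l - k) * real (l choose k)"
    by (rule binom_succ)
  have lk: "real (l - k) > 0" using Suc.prems by simp
  have "real (Suc k) \<le> real (k + Suc d)" by simp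
  also have "\<dots> \<le> C * real (l - (k + Suc d) + 1)" using Suc.prems by simp
  also have "\<dots> \<le> C * real (l - k)" using Suc.prems by (intro mult_left_mono) auto
  finally have "real (l - k) * real (l choose k) \<le> C * real (l - k) * real (l choose Suc k)"
    using e by (smt (verit) mult_right_mono of_nat_0_le_iff mult.commute)
  then have a: "real (l choose k) \<le> C * real (l choose Suc k)"
    using lk by (simp add: mult.assoc mult.left_commute[of C])
  have "real (l choose Suc k) \<le> C ^ d * real (l choose (Suc k + d))"
    by (rule Suc.IH) (use Suc.prems in auto)
  then have "real (l choose k) \<le> C * (C ^ d * real (l choose (Suc k + d)))"
    using a Suc.prems(1) by (smt (verit) mult_left_mono)
  then show ?case by (simp add: mult.assoc)
qed

context
  fixes f :: "int \<Rightarrow> real" and X :: "nat \<Rightarrow> int" and s :: int and l :: nat and t :: int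
  assumes pos: "avg f X s l t > 0"
begin

lemma q_range: "i \<in> {1..l} \<Longrightarrow> 0 < qq f X s l t i \<and> qq f X s l t i \<le> 1"
  using step_facts(1,2)[OF pos] by auto

lemma drop_oth:
  assumes i: "i \<in> {1..l}" and d: "drop_step R N n f X s l t i"
  shows "oth f X s l t i \<le> R / (real N * sqrt (real n))"
proof -
  have i1: "1 \<le> i" "i \<le> l" using i by auto
  have st: "TT f X s l t (i-1) = TT f X s l t i + wseq f X s l t i * X i \<and>
         SS f X s l t (i-1) = SS f X s l t i - wseq f X s l t i" by (rule TS_step[OF i1])
  have W: "Wsum f X s l t i = SS f X s l t i" by (rule Wsum_SS[OF pos i1(2)])
  have w01: "wseq f X s l t i = 0 \<or> wseq f X s l t i = 1" unfolding wseq_eq by (rule wbit_01)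
  have dd: "\<And>y z. y \<in> {0,1::int} \<Longrightarrow> z \<in> {-1,1::int} \<Longrightarrow>
      avg f X (SS f X s l t i - y) (i - 1) (TT f X s l t (i-1) + z * X i) \<le> R / (real N * sqrt (real n))"
    using d unfolding drop_step_def W tseq_eq by blast
  show ?thesis using w01
  proof
    assume w: "wseq f X s l t i = 0"
    have "TT f X s l t (i-1) = TT f X s l t i" using st w by simp
    then show ?thesis using dd[of 1 1] w unfolding oth_def by simp
  next
    assume w: "wseq f X s l t i = 1"
    have "TT f X s l t (i-1) + (-1) * X i = TT f X s l t i" using st w by simp
    then show ?thesis using dd[of 0 "-1"] w unfolding oth_def by simp
  qed
qed

lemma core:
  fixes lam \<gamma> \<beta> R :: real and N n :: nat
  assumes b: "0 < \<beta>" "\<beta> < 1" and lam: "lam = \<beta>^2"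
    and g: "0 \<le> \<gamma>" "\<gamma> \<le> 1"
    and eta: "0 \<le> R / (real N * sqrt (real n))" "R / (real N * sqrt (real n)) \<le> \<gamma> * avg f X s l t"
  shows "avg f X s l t * (1 - \<gamma>) ^ l * real (l choose nat s) *
           lam ^ card {i\<in>{1..l}. robust_step lam f X s l t i \<and> \<not> drop_step R N n f X s l t i} *
           ((1 - lam) ^ l * exp (- 2 * \<beta> * real l)) * ((1 - lam) ^ l * exp (- 2 * \<beta> * real l))
         \<le> hh f X s l t 0"
proof -
  let ?q = "qq f X s l t"
  let ?S = "SS f X s l t"
  let ?w = "wseq f X s l t"
  define D where "D = {i\<in>{1..l}. drop_step R N n f X s l t i}"
  define G where "G = {i\<in>{1..l}. robust_step lam f X s l t i \<and> \<not> drop_step R N n f X s l t i}"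
  define Lo where "Lo = {i\<in>{1..l}. real_of_int (?S i) / real i \<le> lam}"
  define Hi where "Hi = {i\<in>{1..l}. real_of_int (?S i) / real i \<ge> 1 - lam}"
  define L0 where "L0 = {i\<in>Lo. ?w i = 0}"
  define L1 where "L1 = {i\<in>Lo. ?w i = 1}"
  define H0 where "H0 = {i\<in>Hi. ?w i = 0}"
  define H1 where "H1 = {i\<in>Hi. ?w i = 1}"
  have qr: "\<And>i. i \<in> {1..l} \<Longrightarrow> 0 \<le> ?q i \<and> ?q i \<le> 1" using q_range by (auto intro: less_imp_le)
  have w01: "\<And>i. ?w i = 0 \<or> ?w i = 1" unfolding wseq_eq by (rule wbit_01)
  have st: "\<And>i. i \<in> {1..l} \<Longrightarrow> TT f X s l t (i-1) = TT f X s l t i + ?w i * X i \<and> ?S (i-1) = ?S i - ?w i"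
    using TS_step by auto
  have rng: "\<And>i. i \<le> l \<Longrightarrow> 0 \<le> ?S i \<and> ?S i \<le> int i" using SS_range[OF pos] by blast
  have ch: "hh f X s l t 0 * (\<Prod>i\<in>{1..l}. ?q i) \<ge> (1 - \<gamma>) ^ l * (\<Prod>i\<in>{1..l} - D. ?q i) * hh f X s l t l"
    by (rule chain[OF pos g eta]) (use drop_oth D_def in auto)
  have pb: "(\<Prod>i\<in>{1..l}. ?q i) * real (l choose nat (?S l)) = 1" by (rule prod_qq_binom[OF pos]) simp
  have hl: "hh f X s l t l = avg f X s l t" unfolding hh_def TS_top ..
  have Sl: "?S l = s" by (rule TS_top)
  define E where "E = (\<Prod>i\<in>{1..l} - D. ?q i)"
  define B where "B = real (l choose nat s)"
  have Bpos: "B > 0"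
  proof -
    have "nat s \<le> l" using rng[of l] Sl by (simp add: nat_le_iff)
    then show ?thesis unfolding B_def by simp
  qed
  have main1: "hh f X s l t 0 \<ge> (1 - \<gamma>) ^ l * E * avg f X s l t * B"
  proof -
    have "hh f X s l t 0 = hh f X s l t 0 * ((\<Prod>i\<in>{1..l}. ?q i) * B)" using pb Sl unfolding B_def by simp
    also have "\<dots> = (hh f X s l t 0 * (\<Prod>i\<in>{1..l}. ?q i)) * B" by (simp add: mult.assoc)
    also have "\<dots> \<ge> ((1 - \<gamma>) ^ l * E * avg f X s l t) * B"
      using ch hl Bpos unfolding E_def by (intro mult_right_mono) auto
    finally show ?thesis .
  qed
  have sub: "{1..l} - D \<subseteq> G \<union> (Lo \<union> Hi)"
  proof
    fix i assume i: "i \<in> {1..l} - D"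
    then have i1: "i \<in> {1..l}" by auto
    have W: "Wsum f X s l t i = ?S i" using Wsum_SS[OF pos] i1 by auto
    show "i \<in> G \<union> (Lo \<union> Hi)"
    proof (cases "robust_step lam f X s l t i")
      case True then show ?thesis using i unfolding G_def D_def by auto
    next
      case False
      then have "\<not> (lam < real_of_int (?S i) / real i \<and> real_of_int (?S i) / real i < 1 - lam)"
        unfolding robust_step_def W Let_def by simp
      then show ?thesis using i1 unfolding Lo_def Hi_def by auto
    qed
  qed
  have finG: "finite G" "finite Lo" "finite Hi" unfolding G_def Lo_def Hi_def by auto
  have GLH: "G \<union> (Lo \<union> Hi) \<subseteq> {1..l}" unfolding G_def Lo_def Hi_def by auto
  have E1: "E \<ge> (\<Prod>i\<in>G \<union> (Lo \<union> Hi). ?q i)"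
    unfolding E_def by (rule prod_subset_le) (use sub qr finG GLH in \<open>auto 0 3\<close>)
  have E2: "(\<Prod>i\<in>G \<union> (Lo \<union> Hi). ?q i) \<ge> (\<Prod>i\<in>G. ?q i) * (\<Prod>i\<in>Lo \<union> Hi. ?q i)"
    by (rule prod_union_ge) (use finG GLH qr in auto)
  have E3: "(\<Prod>i\<in>Lo \<union> Hi. ?q i) \<ge> (\<Prod>i\<in>Lo. ?q i) * (\<Prod>i\<in>Hi. ?q i)"
    by (rule prod_union_ge) (use finG GLH qr in auto)
  have LoU: "Lo = L0 \<union> L1" unfolding L0_def L1_def using w01 by auto
  have HiU: "Hi = H0 \<union> H1" unfolding H0_def H1_def using w01 by auto
  have finLH: "finite L0" "finite L1" "finite H0" "finite H1"
    using finG unfolding L0_def L1_def H0_def H1_def by auto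
  have LoS: "Lo \<subseteq> {1..l}" "Hi \<subseteq> {1..l}" unfolding Lo_def Hi_def by auto
  have E4: "(\<Prod>i\<in>Lo. ?q i) \<ge> (\<Prod>i\<in>L0. ?q i) * (\<Prod>i\<in>L1. ?q i)"
    unfolding LoU by (rule prod_union_ge) (use finLH LoS LoU qr in auto)
  have E5: "(\<Prod>i\<in>Hi. ?q i) \<ge> (\<Prod>i\<in>H1. ?q i) * (\<Prod>i\<in>H0. ?q i)"
  proof -
    have "Hi = H1 \<union> H0" using HiU by auto
    then show ?thesis by (simp only:) (rule prod_union_ge, use finLH LoS HiU qr in auto)
  qed
  have lam01: "0 < lam" "lam < 1" using b lam by (auto simp: power_less_one_iff)
  have PG: "(\<Prod>i\<in>G. ?q i) \<ge> lam ^ card G"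
  proof -
    have "(\<Prod>i\<in>G. lam) \<le> (\<Prod>i\<in>G. ?q i)"
    proof (rule prod_mono)
      fix i assume i: "i \<in> G"
      then have i1: "i \<in> {1..l}" unfolding G_def by auto
      have W: "Wsum f X s l t i = ?S i" using Wsum_SS[OF pos] i1 by auto
      have r: "lam < real_of_int (?S i) / real i \<and> real_of_int (?S i) / real i < 1 - lam"
        using i W unfolding G_def robust_step_def Let_def by auto
      have "?q i > lam" using r w01[of i] unfolding qq_def by auto
      then show "0 \<le> lam \<and> lam \<le> ?q i" using lam01 by auto
    qed
    then show ?thesis by simp
  qed
  have PL0: "(\<Prod>i\<in>L0. ?q i) \<ge> (1 - lam) ^ l"
  proof -
    have "(\<Prod>i\<in>L0. (1 - lam)) \<le> (\<Prod>i\<in>L0. ?q i)"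
    proof (rule prod_mono)
      fix i assume i: "i \<in> L0"
      then have "real_of_int (?S i) / real i \<le> lam" "?w i = 0" unfolding L0_def Lo_def by auto
      then show "0 \<le> 1 - lam \<and> 1 - lam \<le> ?q i" using lam01 unfolding qq_def by auto
    qed
    moreover have "card L0 \<le> l"
      using card_mono[of "{1..l}" L0] LoS unfolding L0_def by auto
    then have "(1 - lam) ^ l \<le> (1 - lam) ^ card L0"
      using lam01 by (intro power_decreasing) auto
    ultimately show ?thesis by simp
  qed
  have PH1: "(\<Prod>i\<in>H1. ?q i) \<ge> (1 - lam) ^ l"
  proof -
    have "(\<Prod>i\<in>H1. (1 - lam)) \<le> (\<Prod>i\<in>H1. ?q i)"
    proof (rule prod_mono)
      fix i assume i: "i \<in> H1"
      then have "real_of_int (?S i) / real i \<ge> 1 - lam" "?w i = 1" unfolding H1_def Hi_def by auto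
      then show "0 \<le> 1 - lam \<and> 1 - lam \<le> ?q i" using lam01 unfolding qq_def by auto
    qed
    moreover have "card H1 \<le> l"
      using card_mono[of "{1..l}" H1] LoS unfolding H1_def by auto
    then have "(1 - lam) ^ l \<le> (1 - lam) ^ card H1"
      using lam01 by (intro power_decreasing) auto
    ultimately show ?thesis by simp
  qed
  have PL1: "(\<Prod>i\<in>L1. ?q i) \<ge> exp (- 2 * \<beta> * real l)"
  proof -
    have "(\<Prod>i\<in>L1. real_of_int (?S i) / real i) \<ge> exp (- 2 * \<beta> * real l)"
    proof (rule distinct_prod_bound[OF _ _ _ _ b])
      fix i assume "1 \<le> i" "i \<le> l"
      then show "?S (i-1) \<le> ?S i" using st[of i] w01[of i] by auto
    next
      show "L1 \<subseteq> {1..l}" using LoS unfolding L1_def by auto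
    next
      fix i assume i: "i \<in> L1"
      then have i1: "i \<in> {1..l}" and w: "?w i = 1" unfolding L1_def Lo_def by auto
      then show "?S (i-1) = ?S i - 1" using st[OF i1] by simp
    next
      fix i assume i: "i \<in> L1"
      then have i1: "i \<in> {1..l}" and w: "?w i = 1" and le: "real_of_int (?S i) / real i \<le> lam"
        unfolding L1_def Lo_def by auto
      have "0 \<le> ?S (i-1)" using rng[of "i-1"] i1 by auto
      then have "1 \<le> ?S i" using st[OF i1] w by simp
      moreover have "real_of_int (?S i) \<le> \<beta>^2 * real i"
        using le lam i1 by (simp add: divide_le_eq)
      ultimately show "1 \<le> ?S i \<and> real_of_int (?S i) \<le> \<beta>^2 * real i" by simp
    qed
    moreover have "(\<Prod>i\<in>L1. ?q i) = (\<Prod>i\<in>L1. real_of_int (?S i) / real i)"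
      by (rule prod.cong) (auto simp: L1_def qq_def)
    ultimately show ?thesis by simp
  qed
  have PH0: "(\<Prod>i\<in>H0. ?q i) \<ge> exp (- 2 * \<beta> * real l)"
  proof -
    define V where "V i = int i - ?S i" for i
    have "(\<Prod>i\<in>H0. real_of_int (V i) / real i) \<ge> exp (- 2 * \<beta> * real l)"
    proof (rule distinct_prod_bound[OF _ _ _ _ b])
      fix i assume "1 \<le> i" "i \<le> l"
      then show "V (i-1) \<le> V i" using st[of i] w01[of i] unfolding V_def by auto
    next
      show "H0 \<subseteq> {1..l}" using LoS unfolding H0_def by auto
    next
      fix i assume i: "i \<in> H0"
      then have i1: "i \<in> {1..l}" and w: "?w i = 0" unfolding H0_def Hi_def by auto
      then show "V (i-1) = V i - 1" using st[OF i1] unfolding V_def by simp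
    next
      fix i assume i: "i \<in> H0"
      then have i1: "i \<in> {1..l}" and w: "?w i = 0" and ge: "real_of_int (?S i) / real i \<ge> 1 - lam"
        unfolding H0_def Hi_def by auto
      have "?S (i-1) \<le> int (i - 1)" using rng[of "i-1"] i1 by auto
      then have "1 \<le> V i" using st[OF i1] w i1 unfolding V_def by auto
      moreover have "real i - real_of_int (?S i) \<le> lam * real i"
        using ge i1 by (simp add: le_divide_eq algebra_simps)
      then have "real_of_int (V i) \<le> \<beta>^2 * real i" using lam unfolding V_def by simp
      ultimately show "1 \<le> V i \<and> real_of_int (V i) \<le> \<beta>^2 * real i" by simp
    qed
    moreover have "(\<Prod>i\<in>H0. ?q i) = (\<Prod>i\<in>H0. real_of_int (V i) / real i)"
    proof (rule prod.cong)
      fix i assume i: "i \<in> H0"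
      then have i1: "i \<in> {1..l}" and w: "?w i = 0" unfolding H0_def Hi_def by auto
      then show "?q i = real_of_int (V i) / real i"
        unfolding qq_def V_def by (simp add: diff_divide_distrib)
    qed simp
    ultimately show ?thesis by simp
  qed
  have nn: "0 \<le> (\<Prod>i\<in>L0. ?q i)" "0 \<le> (\<Prod>i\<in>L1. ?q i)" "0 \<le> (\<Prod>i\<in>H0. ?q i)" "0 \<le> (\<Prod>i\<in>H1. ?q i)"
    "0 \<le> (\<Prod>i\<in>G. ?q i)"
    using qr LoS GLH unfolding L0_def L1_def H0_def H1_def by (auto intro!: prod_nonneg)
  have lo: "(\<Prod>i\<in>Lo. ?q i) \<ge> (1 - lam) ^ l * exp (- 2 * \<beta> * real l)"
    using E4 PL0 PL1 nn lam01 by (smt (verit) mult_mono zero_le_power exp_ge_zero)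
  have hi: "(\<Prod>i\<in>Hi. ?q i) \<ge> (1 - lam) ^ l * exp (- 2 * \<beta> * real l)"
    using E5 PH1 PH0 nn lam01 by (smt (verit) mult_mono zero_le_power exp_ge_zero)
  have lh: "(\<Prod>i\<in>Lo \<union> Hi. ?q i) \<ge> ((1 - lam) ^ l * exp (- 2 * \<beta> * real l)) * ((1 - lam) ^ l * exp (- 2 * \<beta> * real l))"
    using E3 lo hi lam01 by (smt (verit) mult_mono zero_le_power exp_ge_zero zero_le_mult_iff)
  define Y where "Y = (1 - lam) ^ l * exp (- 2 * \<beta> * real l)"
  have Y0: "Y \<ge> 0" unfolding Y_def using lam01 by simp
  have EY: "E \<ge> lam ^ card G * (Y * Y)"
  proof -
    have "lam ^ card G * (Y * Y) \<le> (\<Prod>i\<in>G. ?q i) * (\<Prod>i\<in>Lo \<union> Hi. ?q i)"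
      by (rule mult_mono) (use PG lh Y0 nn lam01 in \<open>auto simp: Y_def\<close>)
    then show ?thesis using E1 E2 by linarith
  qed
  have A0: "avg f X s l t * (1 - \<gamma>) ^ l * B \<ge> 0" using pos g Bpos by simp
  have "avg f X s l t * (1 - \<gamma>) ^ l * B * (lam ^ card G * (Y * Y)) \<le> avg f X s l t * (1 - \<gamma>) ^ l * B * E"
    by (rule mult_left_mono[OF EY A0])
  also have "\<dots> \<le> hh f X s l t 0" using main1 by (simp add: mult_ac)
  finally show ?thesis unfolding G_def[symmetric] B_def[symmetric] Y_def[symmetric] by (simp add: mult_ac)
qed

end

lemma sum_le_one:
  fixes f :: "int \<Rightarrow> real"
  assumes nn: "\<forall>x. f x \<ge> 0" and hs: "(f has_sum 1) UNIV" and fin: "finite F"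
  shows "sum f F \<le> 1"
proof -
  have "(f has_sum (sum f F)) F" using fin by simp
  then show ?thesis by (rule has_sum_mono_neutral[OF _ hs]) (use nn in auto)
qed

lemma f_le_one:
  fixes f :: "int \<Rightarrow> real"
  assumes nn: "\<forall>x. f x \<ge> 0" and hs: "(f has_sum 1) UNIV"
  shows "f x \<le> 1"
  using sum_le_one[OF nn hs, of "{x}"] by simp

lemma finite_big:
  fixes f :: "int \<Rightarrow> real"
  assumes nn: "\<forall>x. f x \<ge> 0" and hs: "(f has_sum 1) UNIV" and e: "e > 0"
  shows "finite {x. f x \<ge> e}"
proof (rule ccontr)
  assume inf: "infinite {x. f x \<ge> e}"
  define k where "k = nat \<lceil>1 / e\<rceil> + 1"
  obtain F where F: "F \<subseteq> {x. f x \<ge> e}" "finite F" "card F = k"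
    using infinite_arbitrarily_large[OF inf] by blast
  have "sum f F \<ge> sum (\<lambda>_. e) F" by (rule sum_mono) (use F in auto)
  then have "sum f F \<ge> real k * e" using F by simp
  moreover have "real k * e > 1"
  proof -
    have "real k \<ge> 1 / e + 1" unfolding k_def by linarith
    then have "real k * e \<ge> (1 / e + 1) * e" using e by (simp add: mult_right_mono)
    moreover have "(1 / e + 1) * e = 1 + e" using e by (simp add: field_simps)
    ultimately show ?thesis using e by linarith
  qed
  ultimately show False using sum_le_one[OF nn hs F(2)] by linarith
qed

lemma avg_attain:
  fixes f :: "int \<Rightarrow> real"
  assumes nn: "\<forall>x. f x \<ge> 0" and hs: "(f has_sum 1) UNIV" and c0: "c0 > 0"
    and sup: "(SUP t. avg f X s l t) \<ge> c0"
  shows "\<exists>t. avg f X s l t \<ge> c0"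
proof (rule ccontr)
  assume na: "\<not> (\<exists>t. avg f X s l t \<ge> c0)"
  have lt: "avg f X s l t < c0" for t using na by (metis not_le)
  define e where "e = c0 / 2"
  have e0: "e > 0" "e < c0" using c0 unfolding e_def by auto
  define Fs where "Fs = {S. S \<subseteq> {1..l} \<and> card S = nat s}"
  have finFs: "finite Fs" unfolding Fs_def by (rule finite_subset[of _ "Pow {1..l}"]) auto
  have cardFs: "card Fs = l choose nat s" unfolding Fs_def using n_subsets[of "{1..l}" "nat s"] by simp
  define E where "E = {t. avg f X s l t \<ge> e}"
  have Esub: "E \<subseteq> (\<Union>S\<in>Fs. (\<lambda>y. y - (\<Sum>j\<in>S. X j)) ` {y. f y \<ge> e})"
  proof
    fix t assume "t \<in> E"
    then have a: "avg f X s l t \<ge> e" unfolding E_def by simp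
    then have rng: "0 \<le> s \<and> s \<le> int l" using e0 avg_pos_range[of f X s l t] by auto
    then have cp: "card Fs > 0" unfolding cardFs by (simp add: nat_le_iff)
    then have ne: "Fs \<noteq> {}" by auto
    show "t \<in> (\<Union>S\<in>Fs. (\<lambda>y. y - (\<Sum>j\<in>S. X j)) ` {y. f y \<ge> e})"
    proof (rule ccontr)
      assume nt: "t \<notin> (\<Union>S\<in>Fs. (\<lambda>y. y - (\<Sum>j\<in>S. X j)) ` {y. f y \<ge> e})"
      have small: "\<And>S. S \<in> Fs \<Longrightarrow> f (t + (\<Sum>j\<in>S. X j)) < e"
      proof (rule ccontr)
        fix S assume S: "S \<in> Fs" and "\<not> f (t + (\<Sum>j\<in>S. X j)) < e"
        then have "t + (\<Sum>j\<in>S. X j) \<in> {y. f y \<ge> e}" by simp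
        then have "t \<in> (\<lambda>y. y - (\<Sum>j\<in>S. X j)) ` {y. f y \<ge> e}" by (rule image_eqI[rotated]) simp
        then show False using nt S by blast
      qed
      have "(\<Sum>S\<in>Fs. f (t + (\<Sum>j\<in>S. X j))) < (\<Sum>S\<in>Fs. e)"
        by (rule sum_strict_mono[OF finFs ne small])
      then have "(\<Sum>S\<in>Fs. f (t + (\<Sum>j\<in>S. X j))) < real (card Fs) * e" by simp
      moreover have "avg f X s l t = (\<Sum>S\<in>Fs. f (t + (\<Sum>j\<in>S. X j))) / real (card Fs)"
        using rng unfolding avg_def Fs_def cardFs[unfolded Fs_def] by auto
      ultimately have "avg f X s l t < e" using cp by (simp add: divide_less_eq mult.commute)
      then show False using a by simp
    qed
  qed
  have finE: "finite E"
    by (rule finite_subset[OF Esub]) (use finFs finite_big[OF nn hs e0(1)] in auto)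
  define M where "M = Max (insert e ((\<lambda>u. avg f X s l u) ` E))"
  have Mfin: "finite (insert e ((\<lambda>u. avg f X s l u) ` E))" using finE by simp
  have ub: "\<And>t. avg f X s l t \<le> M"
  proof -
    fix t show "avg f X s l t \<le> M"
    proof (cases "t \<in> E")
      case True then show ?thesis unfolding M_def using Mfin by (intro Max_ge) auto
    next
      case False
      then have "avg f X s l t < e" unfolding E_def by auto
      moreover have "e \<le> M" unfolding M_def using Mfin by (intro Max_ge) auto
      ultimately show ?thesis by simp
    qed
  qed
  have Mlt: "M < c0"
  proof -
    have "M \<in> insert e ((\<lambda>u. avg f X s l u) ` E)" unfolding M_def using Mfin by (intro Max_in) auto
    then show ?thesis using lt e0 by auto
  qed
  have "(SUP t. avg f X s l t) \<le> M" by (rule cSUP_least) (use ub in auto)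
  then show False using sup Mlt by simp
qed

lemma pow_ge_exp:
  fixes x :: real
  assumes "0 \<le> x" "x \<le> 1/2" "k \<le> n"
  shows "(1 - x) ^ k \<ge> exp (- 2 * x * real n)"
proof -
  have l: "ln (1 - x) \<ge> - 2 * x"
  proof -
    have "x * (2 * x) \<le> x * 1" using assms by (intro mult_left_mono) auto
    then have "2 * x^2 \<le> x" by (simp add: power2_eq_square)
    then show ?thesis using ln_one_minus_pos_lower_bound[of x] assms by linarith
  qed
  have "(1 - x) ^ k = exp (real k * ln (1 - x))"
    using assms by (simp add: exp_of_nat_mult)
  moreover have "real k * ln (1 - x) \<ge> real n * (- 2 * x)"
  proof -
    have "real k * ln (1 - x) \<ge> real k * (- 2 * x)" by (rule mult_left_mono[OF l]) simp
    moreover have "real k * (- 2 * x) \<ge> real n * (- 2 * x)"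
      using assms by (intro mult_right_mono_neg) auto
    ultimately show ?thesis by linarith
  qed
  ultimately show ?thesis by (simp add: mult_ac)
qed

lemma binom_compare:
  fixes p \<gamma> :: real and n l :: nat and s :: int
  assumes p: "0 < p" "p \<le> 1/2" and g: "0 < \<gamma>" "\<gamma> \<le> p/2" "\<gamma> \<le> 1/4"
    and l: "(1 - \<gamma>) * real n \<le> real l" "l \<le> n"
    and s: "p * real l - \<gamma> * real l \<le> real_of_int s" "real_of_int s \<le> p * real l + \<gamma> * real l"
  shows "real (n choose nat \<lfloor>p * real n\<rfloor>) \<le>
           4 ^ (n - l) * (4 / p) ^ (nat \<bar>\<lfloor>p * real n\<rfloor> - s\<bar>) * real (l choose nat s)"
proof -
  define m where "m = nat \<lfloor>p * real n\<rfloor>"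
  have fl0: "0 \<le> \<lfloor>p * real n\<rfloor>" using p by simp
  have mi: "int m = \<lfloor>p * real n\<rfloor>" unfolding m_def using fl0 by simp
  have mr: "real m \<le> p * real n" using mi by (metis of_int_floor_le of_int_of_nat_eq)
  have shalf: "real_of_int s \<ge> p * real l / 2"
  proof -
    have "\<gamma> * real l \<le> p / 2 * real l" using g by (intro mult_right_mono) auto
    then show ?thesis using s by linarith
  qed
  have s0: "0 \<le> s" using shalf p by (smt (verit) divide_nonneg_nonneg mult_nonneg_nonneg of_int_0_le_iff of_nat_0_le_iff)
  define s' where "s' = nat s"
  have si: "int s' = s" unfolding s'_def using s0 by simp
  have sr: "real s' = real_of_int s" using si by (metis of_int_of_nat_eq)
  have C4: "4 / p \<ge> 8"
  proof -
    have "8 * p \<le> 4" using p by simp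
    then show ?thesis using p by (simp add: le_divide_eq)
  qed
  have "p * real n \<le> 1/2 * real n" using p by (intro mult_right_mono) auto
  then have "real m \<le> real n / 2" using mr by linarith
  moreover have "real l \<ge> 3 / 4 * real n"
  proof -
    have "(1 - \<gamma>) * real n \<ge> 3/4 * real n" using g by (intro mult_right_mono) auto
    then show ?thesis using l by linarith
  qed
  ultimately have "real (4 * m) \<le> real (3 * (l + 1))" by simp
  then have col: "4 * m \<le> 3 * (l + 1)" by (simp only: of_nat_le_iff)
  have c1: "real (n choose m) \<le> 4 ^ (n - l) * real (l choose m)"
    using binom_col[OF col, of "n - l"] l by simp
  have c2: "real (l choose m) \<le> (4 / p) ^ (nat \<bar>\<lfloor>p * real n\<rfloor> - s\<bar>) * real (l choose s')"
  proof (cases "s' \<le> m")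
    case True
    have d: "nat \<bar>\<lfloor>p * real n\<rfloor> - s\<bar> = m - s'" using True mi si by auto
    have cond: "real l \<le> 4 / p * real (s' + 1)"
    proof -
      have "4 / p * real (s' + 1) \<ge> 4 / p * (p * real l / 2)"
        using shalf sr p by (intro mult_left_mono) auto
      moreover have "4 / p * (p * real l / 2) = 2 * real l" using p by (simp add: field_simps)
      ultimately show ?thesis by linarith
    qed
    have "real (l choose (s' + (m - s'))) \<le> (4 / p) ^ (m - s') * real (l choose s')"
      by (rule binom_up) (use p cond in auto)
    then show ?thesis using True d by simp
  next
    case False
    have d: "nat \<bar>\<lfloor>p * real n\<rfloor> - s\<bar> = s' - m" using False mi si by auto
    have s34: "real s' \<le> 3 / 4 * real l"
    proof -
      have "(p + \<gamma>) * real l \<le> 3/4 * real l" using p g by (intro mult_right_mono) auto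
      then show ?thesis using s sr by (simp add: algebra_simps)
    qed
    then have sl: "s' \<le> l" by simp
    have cond: "real (m + (s' - m)) \<le> 4 / p * real (l - (m + (s' - m)) + 1)"
    proof -
      have e: "m + (s' - m) = s'" using False by simp
      have "real (l - s' + 1) = real l - real s' + 1" using sl by (simp add: of_nat_diff)
      then have "8 * real (l - s' + 1) \<ge> real s'" using s34 by simp
      moreover have "4 / p * real (l - s' + 1) \<ge> 8 * real (l - s' + 1)"
        using C4 by (intro mult_right_mono) auto
      ultimately show ?thesis unfolding e by linarith
    qed
    have "real (l choose m) \<le> (4 / p) ^ (s' - m) * real (l choose (m + (s' - m)))"
      by (rule binom_down) (use p cond sl False in auto)
    then show ?thesis using False d by simp
  qed
  have "real (n choose m) \<le> 4 ^ (n - l) * ((4 / p) ^ (nat \<bar>\<lfloor>p * real n\<rfloor> - s\<bar>) * real (l choose s'))"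
    using c1 c2 by (smt (verit) mult_left_mono zero_le_power)
  then show ?thesis unfolding m_def s'_def by (simp add: mult.assoc)
qed

theorem lemma3p11:
  fixes \<delta> K1 K2 K3 :: real
  assumes "0 < \<delta>" "\<delta> < 1/4" "1 < K1" "K1 < K2" "K2 < K3"
  shows "\<exists>c :: real \<Rightarrow> real. (\<forall>p. 0 < p \<and> p \<le> 1/2 \<longrightarrow> c p > 0) \<and>
    (\<forall>p \<epsilon>. 0 < p \<and> p \<le> 1/2 \<and> 0 < \<epsilon> \<and> \<epsilon> \<le> c p \<longrightarrow>
      (\<exists>lam \<gamma> :: real. \<exists>n0 :: nat. 0 < lam \<and> lam < 1/3 \<and> 0 < \<gamma> \<and> \<gamma> < 1 \<and>
        (\<forall>(n::nat) (N::nat) (A::nat \<Rightarrow> int set) (f::int \<Rightarrow> real) (L::real) (l::nat) (s::int) (X::nat \<Rightarrow> int).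
           n \<ge> n0 \<and> 1 \<le> N \<and>
           real N \<le> real (n choose nat \<lfloor>p * real n\<rfloor>) * exp (- \<epsilon> * real n) \<and>
           admissible N n K1 K2 K3 \<delta> A \<and>
           (\<forall>x. f x \<ge> 0) \<and> (f has_sum 1) UNIV \<and>
           L \<ge> 1 \<and>
           (1 - \<gamma>) * real n \<le> real l \<and> l \<le> n \<and>
           p * real l - \<gamma> * real l \<le> real_of_int s \<and> real_of_int s \<le> p * real l + \<gamma> * real l \<and>
           (\<forall>i\<in>{1..n}. X i \<in> A i) \<and>
           (SUP t. avg f X s l t) \<ge> L / (real N * sqrt (real n))
           \<longrightarrow>
           (\<exists>t::int. avg f X s l t \<ge> L / (real N * sqrt (real n)) \<and>
              real (card {i\<in>{1..l}. robust_step lam f X s l t i \<and>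
                                   \<not> drop_step (\<gamma> * L) N n f X s l t i}) \<ge> \<gamma> * real n))))"
proof (rule exI[of _ "\<lambda>p. 1"], intro conjI allI impI)
  fix p :: real assume "0 < p \<and> p \<le> 1/2"
  show "(\<lambda>p. 1::real) p > 0" by simp
next
  fix p \<epsilon> :: real assume pe: "0 < p \<and> p \<le> 1/2 \<and> 0 < \<epsilon> \<and> \<epsilon> \<le> (\<lambda>p. 1::real) p"
  have p: "0 < p" "p \<le> 1/2" and e: "0 < \<epsilon>" "\<epsilon> \<le> 1" using pe by auto
  define \<beta> where "\<beta> = \<epsilon> / 64"
  define lam where "lam = \<beta>^2"
  define Cp where "Cp = 4 / p"
  define K where "K = ln 4 + 2 * ln Cp + 2"
  define L1 where "L1 = ln (1 / lam)"
  define \<gamma> where "\<gamma> = min (p/2) (min (1/4) (min (\<epsilon> / (8 * L1)) (\<epsilon> / (8 * K))))"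
  define n0 where "n0 = nat \<lceil>16 / \<epsilon>^2 + 4 * ln Cp / \<epsilon>\<rceil> + 1"
  have b: "0 < \<beta>" "\<beta> < 1" "\<beta> \<le> \<epsilon> / 64" using e unfolding \<beta>_def by auto
  have lam01: "0 < lam" "lam \<le> \<beta>" using b unfolding lam_def by (auto simp: power2_eq_square mult_le_cancel_right1 intro: mult_left_le_one_le)
  have lam13: "lam < 1/3" using lam01 b e by linarith
  have lamh: "lam \<le> 1/2" using lam13 by simp
  have Cp8: "Cp \<ge> 8"
  proof -
    have "8 * p \<le> 4" using p by simp
    then show ?thesis unfolding Cp_def using p by (simp add: le_divide_eq)
  qed
  have lnCp: "ln Cp > 0" using Cp8 by simp
  have ln4: "ln (4::real) > 0" by simp
  have K0: "K > 0" unfolding K_def using lnCp ln4 by linarith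
  have L10: "L1 > 0" unfolding L1_def using lam01 lam13 by simp
  have lnlam: "ln lam = - L1" unfolding L1_def using lam01 by (simp add: ln_div)
  have g0: "0 < \<gamma>" unfolding \<gamma>_def using p e K0 L10 by simp
  have gp: "\<gamma> \<le> p/2" "\<gamma> \<le> 1/4" unfolding \<gamma>_def by auto
  have gL1: "\<gamma> * L1 \<le> \<epsilon> / 8"
  proof -
    have "\<gamma> \<le> \<epsilon> / (8 * L1)" unfolding \<gamma>_def by auto
    then show ?thesis using L10 by (simp add: le_divide_eq mult_ac)
  qed
  have gK: "\<gamma> * K \<le> \<epsilon> / 8"
  proof -
    have "\<gamma> \<le> \<epsilon> / (8 * K)" unfolding \<gamma>_def by auto
    then show ?thesis using K0 by (simp add: le_divide_eq mult_ac)
  qed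
  have lb: "4 * lam + 4 * \<beta> \<le> \<epsilon> / 8" using lam01 b by linarith
  have P: "\<forall>(n::nat) (N::nat) (A::nat \<Rightarrow> int set) (f::int \<Rightarrow> real) (L::real) (l::nat) (s::int) (X::nat \<Rightarrow> int).
           n \<ge> n0 \<and> 1 \<le> N \<and>
           real N \<le> real (n choose nat \<lfloor>p * real n\<rfloor>) * exp (- \<epsilon> * real n) \<and>
           admissible N n K1 K2 K3 \<delta> A \<and>
           (\<forall>x. f x \<ge> 0) \<and> (f has_sum 1) UNIV \<and>
           L \<ge> 1 \<and>
           (1 - \<gamma>) * real n \<le> real l \<and> l \<le> n \<and>
           p * real l - \<gamma> * real l \<le> real_of_int s \<and> real_of_int s \<le> p * real l + \<gamma> * real l \<and>
           (\<forall>i\<in>{1..n}. X i \<in> A i) \<and>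
           (SUP t. avg f X s l t) \<ge> L / (real N * sqrt (real n))
           \<longrightarrow>
           (\<exists>t::int. avg f X s l t \<ge> L / (real N * sqrt (real n)) \<and>
              real (card {i\<in>{1..l}. robust_step lam f X s l t i \<and>
                                   \<not> drop_step (\<gamma> * L) N n f X s l t i}) \<ge> \<gamma> * real n)"
  proof (intro allI impI)
    fix n N :: nat and A :: "nat \<Rightarrow> int set" and f :: "int \<Rightarrow> real" and L :: real and l :: nat
      and s :: int and X :: "nat \<Rightarrow> int"
    assume H: "n \<ge> n0 \<and> 1 \<le> N \<and>
           real N \<le> real (n choose nat \<lfloor>p * real n\<rfloor>) * exp (- \<epsilon> * real n) \<and>
           admissible N n K1 K2 K3 \<delta> A \<and>
           (\<forall>x. f x \<ge> 0) \<and> (f has_sum 1) UNIV \<and>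
           L \<ge> 1 \<and>
           (1 - \<gamma>) * real n \<le> real l \<and> l \<le> n \<and>
           p * real l - \<gamma> * real l \<le> real_of_int s \<and> real_of_int s \<le> p * real l + \<gamma> * real l \<and>
           (\<forall>i\<in>{1..n}. X i \<in> A i) \<and>
           (SUP t. avg f X s l t) \<ge> L / (real N * sqrt (real n))"
    then have nn0: "n \<ge> n0" and N1: "1 \<le> N"
      and Nb: "real N \<le> real (n choose nat \<lfloor>p * real n\<rfloor>) * exp (- \<epsilon> * real n)"
      and fnn: "\<forall>x. f x \<ge> 0" and hs: "(f has_sum 1) UNIV" and L1': "L \<ge> 1"
      and lb1: "(1 - \<gamma>) * real n \<le> real l" and ln: "l \<le> n"
      and sb: "p * real l - \<gamma> * real l \<le> real_of_int s" "real_of_int s \<le> p * real l + \<gamma> * real l"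
      and sup: "(SUP t. avg f X s l t) \<ge> L / (real N * sqrt (real n))"
      by blast+
    have n1: "n \<ge> 1" using nn0 unfolding n0_def by simp
    have sqn: "sqrt (real n) > 0" using n1 by simp
    define c0 where "c0 = L / (real N * sqrt (real n))"
    have c0p: "c0 > 0" unfolding c0_def using L1' N1 sqn by simp
    obtain t where t: "avg f X s l t \<ge> c0"
      using avg_attain[OF fnn hs c0p] sup unfolding c0_def by blast
    have apos: "avg f X s l t > 0" using t c0p by linarith
    define G where "G = card {i\<in>{1..l}. robust_step lam f X s l t i \<and> \<not> drop_step (\<gamma> * L) N n f X s l t i}"
    define B where "B = real (l choose nat s)"
    define Y where "Y = (1 - lam) ^ l * exp (- 2 * \<beta> * real l)"
    have eta1: "0 \<le> \<gamma> * L / (real N * sqrt (real n))" using g0 L1' N1 sqn by simp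
    have eta2: "\<gamma> * L / (real N * sqrt (real n)) \<le> \<gamma> * avg f X s l t"
    proof -
      have "\<gamma> * L / (real N * sqrt (real n)) = \<gamma> * c0" unfolding c0_def by simp
      then show ?thesis using t g0 by (simp add: mult_left_mono)
    qed
    have g1: "0 \<le> \<gamma>" "\<gamma> \<le> 1" using g0 gp by auto
    have core': "avg f X s l t * (1 - \<gamma>) ^ l * B * lam ^ G * Y * Y \<le> hh f X s l t 0"
      using core[OF apos b(1) b(2) lam_def g1 eta1 eta2] unfolding G_def B_def Y_def by (simp add: mult.assoc)
    have h0: "hh f X s l t 0 \<le> 1"
      unfolding hh_def SS0[OF apos] avg_zero using f_le_one[OF fnn hs] .
    have ineq: "avg f X s l t * (1 - \<gamma>) ^ l * B * lam ^ G * Y * Y \<le> 1" using core' h0 by linarith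
    have "real G \<ge> \<gamma> * real n"
    proof (rule ccontr)
      assume "\<not> real G \<ge> \<gamma> * real n"
      then have Gl: "real G \<le> \<gamma> * real n" by simp
      define Bn where "Bn = real (n choose nat \<lfloor>p * real n\<rfloor>)"
      define Z where "Z = \<gamma> * real n * ln 4 + (2 * \<gamma> * real n + 1) * ln Cp"
      have ga: "lam ^ G \<ge> exp (- (\<epsilon> * real n / 8))"
      proof -
        have "lam ^ G = exp (real G * ln lam)" using lam01 by (simp add: exp_of_nat_mult)
        moreover have "real G * ln lam \<ge> - (\<epsilon> * real n / 8)"
        proof -
          have "real G * L1 \<le> \<gamma> * real n * L1" using Gl L10 by (simp add: mult_right_mono)
          moreover have "\<gamma> * real n * L1 \<le> \<epsilon> / 8 * real n"
          proof -
            have "(\<gamma> * L1) * real n \<le> (\<epsilon> / 8) * real n" by (rule mult_right_mono[OF gL1]) simp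
            then show ?thesis by (simp add: mult_ac)
          qed
          ultimately show ?thesis unfolding lnlam by simp
        qed
        ultimately show ?thesis by simp
      qed
      have ab: "(1 - \<gamma>) ^ l \<ge> exp (- 2 * \<gamma> * real n)"
        by (rule pow_ge_exp) (use g1 gp ln in auto)
      define Y1 where "Y1 = exp (- 2 * lam * real n) * exp (- 2 * \<beta> * real n)"
      have yc: "Y \<ge> Y1"
      proof -
        have "(1 - lam) ^ l \<ge> exp (- 2 * lam * real n)"
          by (rule pow_ge_exp) (use lam01 lamh ln in auto)
        moreover have "exp (- 2 * \<beta> * real l) \<ge> exp (- 2 * \<beta> * real n)"
          using b ln by simp
        moreover have "0 \<le> (1 - lam) ^ l" using lam13 by simp
        ultimately show ?thesis unfolding Y_def Y1_def by (intro mult_mono) auto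
      qed
      have bd: "B \<ge> Bn * exp (- Z)"
      proof -
        have bc: "Bn \<le> 4 ^ (n - l) * Cp ^ (nat \<bar>\<lfloor>p * real n\<rfloor> - s\<bar>) * B"
          unfolding Bn_def B_def Cp_def by (rule binom_compare) (use p g0 gp lb1 ln sb in auto)
        have f4: "(4::real) ^ (n - l) \<le> exp (\<gamma> * real n * ln 4)"
        proof -
          have "(4::real) ^ (n - l) = exp (real (n - l) * ln 4)" by (simp add: exp_of_nat_mult)
          moreover have "real (n - l) \<le> \<gamma> * real n" using lb1 ln by (simp add: of_nat_diff algebra_simps)
          then have "real (n - l) * ln 4 \<le> \<gamma> * real n * ln 4" by (simp add: mult_right_mono)
          ultimately show ?thesis by simp
        qed
        have fC: "Cp ^ (nat \<bar>\<lfloor>p * real n\<rfloor> - s\<bar>) \<le> exp ((2 * \<gamma> * real n + 1) * ln Cp)"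
        proof -
          have powexp: "Cp ^ k = exp (real k * ln Cp)" for k :: nat
            using Cp8 by (simp add: exp_of_nat_mult)
          have "Cp ^ (nat \<bar>\<lfloor>p * real n\<rfloor> - s\<bar>) = exp (real (nat \<bar>\<lfloor>p * real n\<rfloor> - s\<bar>) * ln Cp)"
            by (rule powexp)
          moreover have "real (nat \<bar>\<lfloor>p * real n\<rfloor> - s\<bar>) \<le> 2 * \<gamma> * real n + 1"
          proof -
            have r: "real (nat \<bar>\<lfloor>p * real n\<rfloor> - s\<bar>) = \<bar>real_of_int \<lfloor>p * real n\<rfloor> - real_of_int s\<bar>" by simp
            have f1: "real_of_int \<lfloor>p * real n\<rfloor> \<le> p * real n" "p * real n - 1 < real_of_int \<lfloor>p * real n\<rfloor>"
              by linarith+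
            have d1: "0 \<le> p * real n - p * real l" using p ln by (simp add: algebra_simps mult_left_mono)
            have d2: "p * real n - p * real l \<le> \<gamma> * real n"
            proof -
              have "p * (real n - real l) \<le> 1 * (real n - real l)" using p ln by (intro mult_right_mono) auto
              then show ?thesis using lb1 by (simp add: algebra_simps)
            qed
            have d3: "\<gamma> * real l \<le> \<gamma> * real n" using g0 ln by (simp add: mult_left_mono)
            show ?thesis unfolding r using f1 d1 d2 d3 sb by linarith
          qed
          then have "real (nat \<bar>\<lfloor>p * real n\<rfloor> - s\<bar>) * ln Cp \<le> (2 * \<gamma> * real n + 1) * ln Cp"
            using lnCp by (simp add: mult_right_mono)
          ultimately show ?thesis by simp
        qed
        have B0: "B \<ge> 0" unfolding B_def by simp
        have "Bn \<le> exp (\<gamma> * real n * ln 4) * exp ((2 * \<gamma> * real n + 1) * ln Cp) * B"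
        proof -
          have "4 ^ (n - l) * Cp ^ (nat \<bar>\<lfloor>p * real n\<rfloor> - s\<bar>) \<le> exp (\<gamma> * real n * ln 4) * exp ((2 * \<gamma> * real n + 1) * ln Cp)"
            using f4 fC Cp8 by (intro mult_mono) auto
          then show ?thesis using bc B0 by (smt (verit) mult_right_mono)
        qed
        then have "Bn \<le> exp Z * B" unfolding Z_def by (simp add: exp_add)
        then have "Bn * exp (- Z) \<le> exp Z * B * exp (- Z)" by (simp add: mult_right_mono)
        also have "\<dots> = B" by (simp add: exp_minus field_simps)
        finally show ?thesis .
      qed
      have c1: "avg f X s l t \<ge> 1 / (real N * sqrt (real n))"
      proof -
        have "1 / (real N * sqrt (real n)) \<le> L / (real N * sqrt (real n))"
          using L1' N1 sqn by (simp add: divide_right_mono)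
        then show ?thesis using t unfolding c0_def by linarith
      qed
      define c1 where "c1 = 1 / (real N * sqrt (real n))"
      have c1p: "c1 > 0" unfolding c1_def using N1 sqn by simp
      have Bn0: "Bn > 0"
      proof -
        have "nat \<lfloor>p * real n\<rfloor> \<le> n"
        proof -
          have "p * real n \<le> real n" using p by (simp add: mult_left_le_one_le)
          then show ?thesis by (simp add: nat_le_iff floor_le_iff)
        qed
        then show ?thesis unfolding Bn_def by simp
      qed
      have Y10: "Y1 \<ge> 0" unfolding Y1_def by simp
      have Bge: "B \<ge> 0" unfolding B_def by simp
      have m1: "c1 * exp (- 2 * \<gamma> * real n) \<le> avg f X s l t * (1 - \<gamma>) ^ l"
        using c1 ab c1p apos unfolding c1_def by (intro mult_mono) auto
      have m2: "c1 * exp (- 2 * \<gamma> * real n) * (Bn * exp (- Z)) \<le> avg f X s l t * (1 - \<gamma>) ^ l * B"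
        by (rule mult_mono[OF m1 bd]) (use apos g1 Bn0 in auto)
      have m3: "c1 * exp (- 2 * \<gamma> * real n) * (Bn * exp (- Z)) * exp (- (\<epsilon> * real n / 8))
          \<le> avg f X s l t * (1 - \<gamma>) ^ l * B * lam ^ G"
        by (rule mult_mono[OF m2 ga]) (use apos g1 Bge in auto)
      have m4: "c1 * exp (- 2 * \<gamma> * real n) * (Bn * exp (- Z)) * exp (- (\<epsilon> * real n / 8)) * Y1
          \<le> avg f X s l t * (1 - \<gamma>) ^ l * B * lam ^ G * Y"
        by (rule mult_mono[OF m3 yc]) (use apos g1 Bge lam01 Y10 in auto)
      have m5: "c1 * exp (- 2 * \<gamma> * real n) * (Bn * exp (- Z)) * exp (- (\<epsilon> * real n / 8)) * Y1 * Y1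
          \<le> avg f X s l t * (1 - \<gamma>) ^ l * B * lam ^ G * Y * Y"
        by (rule mult_mono[OF m4 yc]) (use apos g1 Bge lam01 Y10 yc in auto)
      define W where "W = 2 * \<gamma> * real n + Z + \<epsilon> * real n / 8 + 2 * (2 * lam * real n + 2 * \<beta> * real n)"
      have expW: "exp (- 2 * \<gamma> * real n) * exp (- Z) * exp (- (\<epsilon> * real n / 8)) * Y1 * Y1 = exp (- W)"
      proof -
        have "exp (- W) = exp ((- 2 * \<gamma> * real n) + (- Z) + (- (\<epsilon> * real n / 8)) +
               ((- 2 * lam * real n) + (- 2 * \<beta> * real n)) + ((- 2 * lam * real n) + (- 2 * \<beta> * real n)))"
          unfolding W_def by (rule arg_cong[where f = exp]) (simp add: algebra_simps)
        also have "\<dots> = exp (- 2 * \<gamma> * real n) * exp (- Z) * exp (- (\<epsilon> * real n / 8)) * Y1 * Y1"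
          unfolding Y1_def by (simp only: exp_add)
        finally show ?thesis by simp
      qed
      have "c1 * Bn * exp (- W) \<le> 1"
      proof -
        have "c1 * Bn * exp (- W) = c1 * exp (- 2 * \<gamma> * real n) * (Bn * exp (- Z)) * exp (- (\<epsilon> * real n / 8)) * Y1 * Y1"
          unfolding expW[symmetric] by (simp add: mult_ac)
        then show ?thesis using m5 ineq by linarith
      qed
      then have "Bn * exp (- W) \<le> real N * sqrt (real n)"
        unfolding c1_def using N1 sqn by (simp add: field_simps)
      also have "\<dots> \<le> Bn * exp (- \<epsilon> * real n) * sqrt (real n)"
        using Nb sqn unfolding Bn_def by (simp add: mult_right_mono)
      finally have "exp (- W) \<le> exp (- \<epsilon> * real n) * sqrt (real n)"
        using Bn0 by (simp add: mult.assoc)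
      then have "exp (- W) * exp (\<epsilon> * real n) \<le> sqrt (real n)"
        by (simp add: exp_minus field_simps)
      then have ex: "exp (\<epsilon> * real n - W) \<le> sqrt (real n)"
        by (simp add: exp_diff exp_minus field_simps)
      have Wb: "\<epsilon> * real n - W \<ge> 5 / 8 * \<epsilon> * real n - ln Cp"
      proof -
        have "W = \<gamma> * K * real n + ln Cp + \<epsilon> * real n / 8 + (4 * lam + 4 * \<beta>) * real n"
          unfolding W_def Z_def K_def by (simp add: algebra_simps)
        moreover have "\<gamma> * K * real n \<le> \<epsilon> / 8 * real n" by (rule mult_right_mono[OF gK]) simp
        moreover have "(4 * lam + 4 * \<beta>) * real n \<le> \<epsilon> / 8 * real n" by (rule mult_right_mono[OF lb]) simp
        ultimately show ?thesis by (simp add: algebra_simps)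
      qed
      have nb: "real n \<ge> 16 / \<epsilon>^2 + 4 * ln Cp / \<epsilon>"
      proof -
        have "real n0 \<ge> 16 / \<epsilon>^2 + 4 * ln Cp / \<epsilon>" unfolding n0_def by linarith
        then show ?thesis using nn0 by linarith
      qed
      have sq: "sqrt (real n) \<le> \<epsilon> * real n / 4"
      proof -
        have "16 / \<epsilon>^2 \<le> real n" using nb lnCp e by (smt (verit) divide_nonneg_nonneg)
        then have "sqrt (16 / \<epsilon>^2) \<le> sqrt (real n)" by (rule real_sqrt_le_mono)
        moreover have "sqrt (16 / \<epsilon>^2) = 4 / \<epsilon>" using e by (simp add: real_sqrt_divide)
        ultimately have "4 / \<epsilon> \<le> sqrt (real n)" by simp
        then have "4 \<le> \<epsilon> * sqrt (real n)" using e by (simp add: divide_le_eq mult.commute)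
        then have "4 * sqrt (real n) \<le> \<epsilon> * sqrt (real n) * sqrt (real n)" using sqn by (simp add: mult_right_mono)
        also have "\<dots> = \<epsilon> * real n" by (simp add: mult.assoc)
        finally show ?thesis by simp
      qed
      have lc: "ln Cp \<le> \<epsilon> * real n / 4"
      proof -
        have "4 * ln Cp / \<epsilon> \<le> real n" using nb e by (smt (verit) divide_nonneg_nonneg zero_le_power2)
        then show ?thesis using e by (simp add: divide_le_eq mult.commute)
      qed
      have en: "\<epsilon> * real n \<ge> 0" using e by simp
      have "sqrt (real n) \<le> \<epsilon> * real n - W" using Wb sq lc en by linarith
      moreover have "\<epsilon> * real n - W < exp (\<epsilon> * real n - W)"
        using exp_ge_add_one_self[of "\<epsilon> * real n - W"] by linarith
      ultimately show False using ex by linarith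
    qed
    then show "\<exists>t::int. avg f X s l t \<ge> L / (real N * sqrt (real n)) \<and>
              real (card {i\<in>{1..l}. robust_step lam f X s l t i \<and>
                                   \<not> drop_step (\<gamma> * L) N n f X s l t i}) \<ge> \<gamma> * real n"
      using t unfolding c0_def G_def by blast
  qed
  show "\<exists>lam \<gamma> :: real. \<exists>n0 :: nat. 0 < lam \<and> lam < 1/3 \<and> 0 < \<gamma> \<and> \<gamma> < 1 \<and>
        (\<forall>(n::nat) (N::nat) (A::nat \<Rightarrow> int set) (f::int \<Rightarrow> real) (L::real) (l::nat) (s::int) (X::nat \<Rightarrow> int).
           n \<ge> n0 \<and> 1 \<le> N \<and>
           real N \<le> real (n choose nat \<lfloor>p * real n\<rfloor>) * exp (- \<epsilon> * real n) \<and>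
           admissible N n K1 K2 K3 \<delta> A \<and>
           (\<forall>x. f x \<ge> 0) \<and> (f has_sum 1) UNIV \<and>
           L \<ge> 1 \<and>
           (1 - \<gamma>) * real n \<le> real l \<and> l \<le> n \<and>
           p * real l - \<gamma> * real l \<le> real_of_int s \<and> real_of_int s \<le> p * real l + \<gamma> * real l \<and>
           (\<forall>i\<in>{1..n}. X i \<in> A i) \<and>
           (SUP t. avg f X s l t) \<ge> L / (real N * sqrt (real n))
           \<longrightarrow>
           (\<exists>t::int. avg f X s l t \<ge> L / (real N * sqrt (real n)) \<and>
              real (card {i\<in>{1..l}. robust_step lam f X s l t i \<and>
                                   \<not> drop_step (\<gamma> * L) N n f X s l t i}) \<ge> \<gamma> * real n))"
    apply (rule exI[of _ lam])
    apply (rule exI[of _ \<gamma>])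
    apply (rule exI[of _ n0])
    using lam01 lam13 g0 gp P by simp
qed

end
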